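(* Consider ASAGA with step size $\gamma>0$ (described in the context). For all $t\ge0$, $$a_{t+1}\le\Big(1-\frac{\gamma\mu}{2}\Big)a_t+\gamma^2C_1\,\mathbb{E}\|g_t\|^2+\gamma^2C_2\sum_{u=(t-\tau)_+}^{t-1}\mathbb{E}\|g_u\|^2-2\gamma e_t,$$ where $C_1:=1+\sqrt\Delta\,\tau$, $C_2:=\sqrt\Delta+\gamma\mu C_1$, $a_t:=\mathbb{E}\|x_t-x^*\|^2$ and $e_t:=\mathbb{E}f(\hat x_t)-f(x^* )$.
   Context: Problem: $f(x)=\frac1n\sum_{i=1}^n f_i(x)$ on $\mathbb{R}^d$, each $f_i$ convex, differentiable with $L$-Lipschitz gradient $f_i'$; $f$ is $\mu$-strongly convex with minimizer $x^*$. $S_i$ is the support of $f_i'$. $p_v:=|\{i:v\in S_i\}|/n$; $D$ diagonal with entries $1/p_v$ (for $p_v>0$); $D_i:=P_{S_i}D$ with $P_{S_i}$ the coordinate projection onto $S_i$. $\Delta:=\frac1n\max_v|\{i:v\in S_i\}|$. ASAGA: shared memory holds $x$ (initially $x_0$) and $\alpha_1,\dots,\alpha_n$ (initially arbitrary fixed $\alpha_i^0$). Cores concurrently and without locks repeat: (1) read $x$ and all $\alpha_j$ into local copies $\hat x,\hat\alpha_j$, possibly inconsistently, in a manner not depending on the next sample; (2) sample $i$ uniformly from $\{1,\dots,n\}$ independently; (3) compute $\delta=-\gamma(f_i'(\hat x)-\hat\alpha_i+D_i\frac1n\sum_k\hat\alpha_k)$; (4) for each $v\in S_i$ atomically add $[\delta]_v$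 to $[x]_v$ and set $[\alpha_i]_v\leftarrow[f_i'(\hat x)]_v$. Iterations are labeled $t=0,1,\dots$ in order of completion of their read step; $\hat x_t,\hat\alpha^t,i_t$ are the reads and sample of iteration $t$; $g_t:=f'_{i_t}(\hat x_t)-\hat\alpha^t_{i_t}+D_{i_t}(\frac1n\sum_k\hat\alpha^t_k)$. Then $[\hat x_t]_v=[x_0]_v-\gamma\sum[g_u]_v$ over those $u<t$ whose write to coordinate $v$ was completed before iteration $t$ read it, and $i_r$ is independent of $\hat x_t$ for $r\ge t$. Bounded overlap: every write of iteration $t$ is completed before iteration $t+\tau+1$ starts reading. The virtual iterate is defined by $x_{t+1}:=x_t-\gamma g_t$ (starting at $x_0$). $(s)_+:=\max(s,0)$; $\mathbb{E}$ is expectation over all randomness. *)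

theory Defs
  imports "HOL-Probability.Probability"
begin

definition strongly_convex_on :: "real \<Rightarrow> ('a::real_normed_vector) set \<Rightarrow> ('a \<Rightarrow> real) \<Rightarrow> bool" where
  "strongly_convex_on \<mu> A g \<longleftrightarrow> convex A \<and>
     (\<forall>x\<in>A. \<forall>y\<in>A. \<forall>t::real. 0 \<le> t \<and> t \<le> 1 \<longrightarrow>
        g ((1 - t) *\<^sub>R x + t *\<^sub>R y) \<le> (1 - t) * g x + t * g y - \<mu> / 2 * t * (1 - t) * (norm (x - y))\<^sup>2)"

definition favg :: "nat \<Rightarrow> (nat \<Rightarrow> real^'d \<Rightarrow> real) \<Rightarrow> real^'d \<Rightarrow> real" where
  "favg n fs x = (\<Sum>i<n. fs i x) / real n"

definition supp :: "(nat \<Rightarrow> real^'d \<Rightarrow> real^'d) \<Rightarrow> nat \<Rightarrow> 'd set" where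
  "supp fs' i = {v. \<exists>x. fs' i x $ v \<noteq> 0}"

definition pv :: "nat \<Rightarrow> (nat \<Rightarrow> real^'d \<Rightarrow> real^'d) \<Rightarrow> 'd \<Rightarrow> real" where
  "pv n fs' v = real (card {i\<in>{..<n}. v \<in> supp fs' i}) / real n"

text \<open>D_i y = P_{S_i} D y, D diagonal with entries 1/p_v (for v in S_i we have p_v > 0).\<close>
definition Dmat :: "nat \<Rightarrow> (nat \<Rightarrow> real^'d \<Rightarrow> real^'d) \<Rightarrow> nat \<Rightarrow> real^'d \<Rightarrow> real^'d" where
  "Dmat n fs' i y = (\<chi> v. if v \<in> supp fs' i then y $ v / pv n fs' v else 0)"

definition Delta :: "nat \<Rightarrow> (nat \<Rightarrow> real^'d \<Rightarrow> real^'d) \<Rightarrow> real" where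
  "Delta n fs' = real (Max (range (\<lambda>v::'d::finite. card {i\<in>{..<n}. v \<in> supp fs' i}))) / real n"

text \<open>The ASAGA update direction g_t, computed from the sample i_t and the
  (possibly inconsistent) reads xh = hat x_t and ah = (hat alpha^t_j)_j.\<close>
definition gdir :: "nat \<Rightarrow> (nat \<Rightarrow> real^'d \<Rightarrow> real^'d) \<Rightarrow> nat \<Rightarrow> real^'d \<Rightarrow> (nat \<Rightarrow> real^'d) \<Rightarrow> real^'d" where
  "gdir n fs' i xh ah = fs' i xh - ah i + Dmat n fs' i ((\<Sum>k<n. ah k) /\<^sub>R real n)"

end

theory Submission
  imports Defs
begin
locale asaga =
  fixes M :: "'w measure"
    and n :: nat and fs :: "nat \<Rightarrow> real^'d \<Rightarrow> real" and fs' :: "nat \<Rightarrow> real^'d \<Rightarrow> real^'d"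
    and L \<mu> \<gamma> :: real and \<tau> :: nat and xstar x0 :: "real^'d" and \<alpha>0 :: "nat \<Rightarrow> real^'d"
    and smp :: "nat \<Rightarrow> 'w \<Rightarrow> nat"
    and xh :: "nat \<Rightarrow> 'w \<Rightarrow> real^'d"
    and ah :: "nat \<Rightarrow> nat \<Rightarrow> 'w \<Rightarrow> real^'d"
    and rd :: "nat \<Rightarrow> nat \<Rightarrow> 'd \<Rightarrow> 'w \<Rightarrow> bool"
    and A :: "nat \<Rightarrow> nat \<Rightarrow> 'd \<Rightarrow> 'w \<Rightarrow> nat option"
    and g :: "nat \<Rightarrow> 'w \<Rightarrow> real^'d" and x :: "nat \<Rightarrow> 'w \<Rightarrow> real^'d"
    and a e :: "nat \<Rightarrow> real"
  assumes n_pos: "n \<ge> 1"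
    and conv: "\<And>i. i < n \<Longrightarrow> convex_on UNIV (fs i)"
    and grad: "\<And>i y. i < n \<Longrightarrow> (fs i has_derivative (\<lambda>h. fs' i y \<bullet> h)) (at y)"
    and lip: "\<And>i. i < n \<Longrightarrow> L-lipschitz_on UNIV (fs' i)"
    and mu_pos: "\<mu> > 0"
    and strong: "strongly_convex_on \<mu> UNIV (favg n fs)"
    and minim: "\<And>y. favg n fs xstar \<le> favg n fs y"
    and gamma_pos: "\<gamma> > 0"
    and alpha0_supp: "\<And>j v. j < n \<Longrightarrow> v \<notin> supp fs' j \<Longrightarrow> \<alpha>0 j $ v = 0"
    and P: "prob_space M"
    and smp_meas: "\<And>t. smp t \<in> measurable M (count_space UNIV)"
    and xh_meas: "\<And>t. xh t \<in> borel_measurable M"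
    and ah_meas: "\<And>t j. ah t j \<in> borel_measurable M"
    and smp_range: "\<And>t \<omega>. \<omega> \<in> space M \<Longrightarrow> smp t \<omega> < n"
    and smp_unif: "\<And>t j. j < n \<Longrightarrow> measure M {\<omega> \<in> space M. smp t \<omega> = j} = 1 / real n"
    and smp_indep: "\<And>t. prob_space.indep_set M
        (sets (vimage_algebra (space M) (smp t) (count_space UNIV)))
        (sets (vimage_algebra (space M)
           (\<lambda>\<omega>. (\<lambda>s\<in>{..t}. (xh s \<omega>, \<lambda>j\<in>{..<n}. ah s j \<omega>), \<lambda>s\<in>{..<t}. smp s \<omega>))
           (PiM {..t} (\<lambda>_. borel \<Otimes>\<^sub>M PiM {..<n} (\<lambda>_. borel)) \<Otimes>\<^sub>M PiM {..<t} (\<lambda>_. count_space UNIV))))"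
    and g_def: "g \<equiv> (\<lambda>t \<omega>. gdir n fs' (smp t \<omega>) (xh t \<omega>) (\<lambda>j. ah t j \<omega>))"
    and xh_read: "\<And>t v \<omega>. \<omega> \<in> space M \<Longrightarrow>
        xh t \<omega> $ v = x0 $ v - \<gamma> * (\<Sum>u | u < t \<and> v \<in> supp fs' (smp u \<omega>) \<and> rd t u v \<omega>. g u \<omega> $ v)"
    and overlap_x: "\<And>t u v \<omega>. \<omega> \<in> space M \<Longrightarrow> u + \<tau> + 1 \<le> t \<Longrightarrow> rd t u v \<omega>"
    and ah_read: "\<And>t j v \<omega>. \<omega> \<in> space M \<Longrightarrow> j < n \<Longrightarrow>
        ah t j \<omega> $ v = (case A t j v \<omega> of None \<Rightarrow> \<alpha>0 j $ v | Some u \<Rightarrow> fs' j (xh u \<omega>) $ v)"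
    and A_valid: "\<And>t j v \<omega> u. \<omega> \<in> space M \<Longrightarrow> A t j v \<omega> = Some u \<Longrightarrow>
        u < t \<and> smp u \<omega> = j \<and> v \<in> supp fs' j"
    and overlap_alpha: "\<And>t j v \<omega> u. \<omega> \<in> space M \<Longrightarrow> u + \<tau> + 1 \<le> t \<Longrightarrow> smp u \<omega> = j \<Longrightarrow>
        v \<in> supp fs' j \<Longrightarrow> A t j v \<omega> \<noteq> None"
    and x_def: "x \<equiv> (\<lambda>t \<omega>. x0 - \<gamma> *\<^sub>R (\<Sum>u<t. g u \<omega>))"
    and a_def: "a \<equiv> (\<lambda>t. integral\<^sup>L M (\<lambda>\<omega>. (norm (x t \<omega> - xstar))\<^sup>2))"
    and e_def: "e \<equiv> (\<lambda>t. integral\<^sup>L M (\<lambda>\<omega>. favg n fs (xh t \<omega>)) - favg n fs xstar)"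


lemma finite_vec_set:
  assumes "\<And>v. finite (F v)"
  shows "finite {y::real^'n. \<forall>v. y $ v \<in> F v}"
proof -
  have "{y::real^'n. \<forall>v. y $ v \<in> F v} \<subseteq> vec_lambda ` (PiE UNIV F)"
  proof
    fix y :: "real^'n" assume "y \<in> {y. \<forall>v. y $ v \<in> F v}"
    then have "(\<lambda>v. y $ v) \<in> PiE UNIV F" by auto
    moreover have "y = vec_lambda (\<lambda>v. y $ v)" by simp
    ultimately show "y \<in> vec_lambda ` (PiE UNIV F)" by blast
  qed
  moreover have "finite (PiE UNIV F)" by (rule finite_PiE) (auto simp: assms)
  ultimately show ?thesis by (meson finite_imageI finite_subset)
qed

context asaga
begin

sublocale prob_space M by (rule P)

lemma fs'_supp: "v \<notin> supp fs' i \<Longrightarrow> fs' i y $ v = 0"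
  by (auto simp: supp_def)

lemma ah_supp:
  assumes "\<omega> \<in> space M" "j < n" "v \<notin> supp fs' j"
  shows "ah t j \<omega> $ v = 0"
  using ah_read[OF assms(1,2), of t v] alpha0_supp[OF assms(2,3)] fs'_supp[OF assms(3)]
  by (auto split: option.splits)

lemma Dmat_supp: "v \<notin> supp fs' i \<Longrightarrow> Dmat n fs' i y $ v = 0"
  by (simp add: Dmat_def)

lemma g_supp:
  assumes "\<omega> \<in> space M" "v \<notin> supp fs' (smp t \<omega>)"
  shows "g t \<omega> $ v = 0"
  using assms smp_range[OF assms(1), of t]
  by (simp add: g_def gdir_def fs'_supp ah_supp Dmat_supp)

lemma gdir_cong:
  assumes "i < n" "\<And>j. j < n \<Longrightarrow> b j = b' j"
  shows "gdir n fs' i y b = gdir n fs' i y b'"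
  using assms by (simp add: gdir_def)

lemma fin_ah:
  assumes "\<And>u. u < t \<Longrightarrow> finite (xh u ` space M)" "j < n"
  shows "finite ((\<lambda>\<omega>. ah t j \<omega>) ` space M)"
proof -
  define F where "F v = {\<alpha>0 j $ v} \<union> (\<Union>u<t. (\<lambda>y. fs' j y $ v) ` (xh u ` space M))" for v
  have "finite (F v)" for v using assms(1) by (auto simp: F_def)
  then have fin: "finite {y::real^'d. \<forall>v. y $ v \<in> F v}" by (rule finite_vec_set)
  have "(\<lambda>\<omega>. ah t j \<omega>) ` space M \<subseteq> {y::real^'d. \<forall>v. y $ v \<in> F v}"
  proof safe
    fix \<omega> v assume om: "\<omega> \<in> space M"
    show "ah t j \<omega> $ v \<in> F v"
    proof (cases "A t j v \<omega>")
      case None then show ?thesis using ah_read[OF om assms(2), of t v] by (simp add: F_def)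
    next
      case (Some u)
      then have "u < t" using A_valid[OF om] by blast
      then show ?thesis using ah_read[OF om assms(2), of t v] Some om by (auto simp: F_def)
    qed
  qed
  then show ?thesis using fin finite_subset by blast
qed

lemma g_eq: "\<omega> \<in> space M \<Longrightarrow> g t \<omega> = gdir n fs' (smp t \<omega>) (xh t \<omega>) (restrict (\<lambda>j. ah t j \<omega>) {..<n})"
  unfolding g_def by (rule gdir_cong) (auto simp: smp_range)

lemma fin_g:
  assumes "finite (xh t ` space M)" "\<And>j. j < n \<Longrightarrow> finite ((\<lambda>\<omega>. ah t j \<omega>) ` space M)"
  shows "finite (g t ` space M)"
proof -
  have "g t ` space M \<subseteq> (\<lambda>(i,y,b). gdir n fs' i y b) ` ({..<n} \<times> (xh t ` space M) \<times> PiE {..<n} (\<lambda>j. (\<lambda>\<omega>. ah t j \<omega>) ` space M))"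
  proof safe
    fix \<omega> assume om: "\<omega> \<in> space M"
    have "(smp t \<omega>, xh t \<omega>, restrict (\<lambda>j. ah t j \<omega>) {..<n}) \<in> ({..<n} \<times> (xh t ` space M) \<times> PiE {..<n} (\<lambda>j. (\<lambda>\<omega>. ah t j \<omega>) ` space M))"
      using om smp_range[OF om] by auto
    moreover have "g t \<omega> = (\<lambda>(i,y,b). gdir n fs' i y b) (smp t \<omega>, xh t \<omega>, restrict (\<lambda>j. ah t j \<omega>) {..<n})"
      using g_eq[OF om] by simp
    ultimately show "g t \<omega> \<in> (\<lambda>(i,y,b). gdir n fs' i y b) ` ({..<n} \<times> (xh t ` space M) \<times> PiE {..<n} (\<lambda>j. (\<lambda>\<omega>. ah t j \<omega>) ` space M))"
      by (rule rev_image_eqI)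
  qed
  moreover have "finite ({..<n} \<times> (xh t ` space M) \<times> PiE {..<n} (\<lambda>j. (\<lambda>\<omega>. ah t j \<omega>) ` space M))"
    using assms by (auto intro!: finite_PiE)
  ultimately show ?thesis by (meson finite_imageI finite_subset)
qed

lemma fin_xh: "finite (xh t ` space M)"
proof (induction t rule: less_induct)
  case (less t)
  have fg: "finite (g u ` space M)" if "u < t" for u
    using that less by (intro fin_g fin_ah) auto
  define F where "F v = (\<lambda>(U,c). x0 $ v - \<gamma> * sum c U) ` (Pow {..<t} \<times> PiE {..<t} (\<lambda>u. (\<lambda>y. y $ v) ` (g u ` space M)))" for v
  have "finite (Pow {..<t} \<times> PiE {..<t} (\<lambda>u. (\<lambda>y. y $ v) ` (g u ` space M)))" for v
    using fg by (intro finite_cartesian_product finite_PiE) auto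
  then have "finite (F v)" for v unfolding F_def by (rule finite_imageI)
  then have fin: "finite {y::real^'d. \<forall>v. y $ v \<in> F v}" by (rule finite_vec_set)
  have "xh t ` space M \<subseteq> {y::real^'d. \<forall>v. y $ v \<in> F v}"
  proof safe
    fix \<omega> v assume om: "\<omega> \<in> space M"
    define U where "U = {u. u < t \<and> v \<in> supp fs' (smp u \<omega>) \<and> rd t u v \<omega>}"
    define c where "c = restrict (\<lambda>u. g u \<omega> $ v) {..<t}"
    have mem: "(U, c) \<in> Pow {..<t} \<times> PiE {..<t} (\<lambda>u. (\<lambda>y. y $ v) ` (g u ` space M))"
      using om by (auto simp: U_def c_def)
    have "sum c U = (\<Sum>u\<in>U. g u \<omega> $ v)" by (rule sum.cong) (auto simp: U_def c_def)
    then have "xh t \<omega> $ v = x0 $ v - \<gamma> * sum c U" using xh_read[OF om, of t v] by (simp add: U_def)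
    then have "xh t \<omega> $ v = (\<lambda>(U,c). x0 $ v - \<gamma> * sum c U) (U, c)" by simp
    then show "xh t \<omega> $ v \<in> F v" unfolding F_def using mem by (rule rev_image_eqI[rotated])
  qed
  then show ?case using fin finite_subset by blast
qed

lemma fin_ah': "j < n \<Longrightarrow> finite ((\<lambda>\<omega>. ah t j \<omega>) ` space M)"
  by (rule fin_ah) (auto simp: fin_xh)

lemma fin_g': "finite (g t ` space M)"
  by (rule fin_g) (auto simp: fin_xh fin_ah')

end

context asaga
begin

lemma fv_comp: "finite (f ` S) \<Longrightarrow> finite ((\<lambda>\<omega>. h (f \<omega>)) ` S)"
  by (metis finite_imageI image_image)

lemma fv_comp2:
  assumes "finite (f ` S)" "finite (k ` S)"
  shows "finite ((\<lambda>\<omega>. h (f \<omega>) (k \<omega>)) ` S)"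
proof -
  have "(\<lambda>\<omega>. h (f \<omega>) (k \<omega>)) ` S \<subseteq> (\<lambda>(p,q). h p q) ` (f ` S \<times> k ` S)" by auto
  moreover have "finite ((\<lambda>(p,q). h p q) ` (f ` S \<times> k ` S))" using assms by auto
  ultimately show ?thesis by (rule finite_subset)
qed

lemma fv_sum:
  assumes "finite I" "\<And>i. i \<in> I \<Longrightarrow> finite (f i ` S)"
  shows "finite ((\<lambda>\<omega>. \<Sum>i\<in>I. f i \<omega>) ` S)"
proof -
  have "(\<lambda>\<omega>. \<Sum>i\<in>I. f i \<omega>) ` S \<subseteq> (\<lambda>c. \<Sum>i\<in>I. c i) ` PiE I (\<lambda>i. f i ` S)"
  proof safe
    fix \<omega> assume "\<omega> \<in> S"
    then have "restrict (\<lambda>i. f i \<omega>) I \<in> PiE I (\<lambda>i. f i ` S)" by auto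
    then show "(\<Sum>i\<in>I. f i \<omega>) \<in> (\<lambda>c. \<Sum>i\<in>I. c i) ` PiE I (\<lambda>i. f i ` S)"
      by (intro image_eqI[of _ "\<lambda>c. \<Sum>i\<in>I. c i" "restrict (\<lambda>i. f i \<omega>) I"]) simp_all
  qed
  moreover have "finite (PiE I (\<lambda>i. f i ` S))" using assms by (intro finite_PiE) auto
  ultimately show ?thesis by (meson finite_imageI finite_subset)
qed

lemma fv_integrable:
  fixes f :: "'w \<Rightarrow> real"
  assumes "f \<in> borel_measurable M" "finite (f ` space M)"
  shows "integrable M f"
proof (rule finite_measure.integrable_const_bound[OF _ _ assms(1)])
  show "finite_measure M" by unfold_locales
  show "AE \<omega> in M. norm (f \<omega>) \<le> (\<Sum>y\<in>f ` space M. norm y)"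
    by (rule AE_I2) (rule member_le_sum, auto simp: assms(2))
qed

lemma fv_smp: "finite (smp t ` space M)"
  by (rule finite_subset[of _ "{..<n}"]) (auto simp: smp_range)

lemma fv_x: "finite (x t ` space M)"
  unfolding x_def by (rule fv_comp[OF fv_sum]) (auto simp: fin_g')

lemma cont_fs': "i < n \<Longrightarrow> continuous_on UNIV (fs' i)"
  using lip lipschitz_on_continuous_on by blast

lemma cont_fs: "i < n \<Longrightarrow> continuous_on UNIV (fs i)"
  by (meson continuous_at_imp_continuous_on grad has_derivative_continuous)

lemma cont_favg: "continuous_on UNIV (favg n fs)"
  unfolding favg_def[abs_def]
  by (intro continuous_on_divide continuous_on_sum continuous_on_const) (use n_pos cont_fs in auto)

lemma cont_Dmat: "continuous_on UNIV (Dmat n fs' i)"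
  unfolding Dmat_def[abs_def]
proof (intro continuous_on_vec_lambda)
  fix v show "continuous_on UNIV (\<lambda>y::real^'d. if v \<in> supp fs' i then y $ v / pv n fs' v else 0)"
  proof (cases "v \<in> supp fs' i")
    case True
    have "continuous_on UNIV (\<lambda>y::real^'d. y $ v / pv n fs' v)"
      by (rule linear_continuous_on[OF bounded_linear_compose[OF bounded_linear_divide bounded_linear_vec_nth]])
    then show ?thesis using True by simp
  qed simp
qed

lemma meas_G:
  fixes X :: "'z \<Rightarrow> real^'d"
  assumes X: "X \<in> borel_measurable N" and Y: "\<And>j. j < n \<Longrightarrow> Y j \<in> borel_measurable N"
    and I: "I \<in> measurable N (count_space UNIV)"
  shows "(\<lambda>z. \<Sum>i<n. if I z = i then gdir n fs' i (X z) (\<lambda>j. Y j z) else 0) \<in> borel_measurable N"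
proof (rule borel_measurable_sum)
  fix i assume i: "i \<in> {..<n}"
  have s: "{z \<in> space N. I z = i} \<in> sets N"
    using measurable_sets[OF I, of "{i}"] by (simp add: vimage_def Int_def conj_commute)
  have f1: "(\<lambda>z. fs' i (X z)) \<in> borel_measurable N"
    using i by (intro measurable_compose[OF X borel_measurable_continuous_onI[OF cont_fs']]) auto
  have f2: "(\<lambda>z. (\<Sum>k<n. Y k z) /\<^sub>R real n) \<in> borel_measurable N"
    using Y by (intro borel_measurable_scaleR borel_measurable_const borel_measurable_sum) auto
  have f3: "(\<lambda>z. Dmat n fs' i ((\<Sum>k<n. Y k z) /\<^sub>R real n)) \<in> borel_measurable N"
    by (rule measurable_compose[OF f2 borel_measurable_continuous_onI[OF cont_Dmat]])
  have "(\<lambda>z. gdir n fs' i (X z) (\<lambda>j. Y j z)) \<in> borel_measurable N"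
    unfolding gdir_def using f1 f3 Y[of i] i
    by (intro borel_measurable_add borel_measurable_diff) auto
  then show "(\<lambda>z. if I z = i then gdir n fs' i (X z) (\<lambda>j. Y j z) else 0) \<in> borel_measurable N"
    by (rule measurable_If[OF _ borel_measurable_const s])
qed

lemma g_alt: "\<omega> \<in> space M \<Longrightarrow>
   g t \<omega> = (\<Sum>i<n. if smp t \<omega> = i then gdir n fs' i (xh t \<omega>) (\<lambda>j. ah t j \<omega>) else 0)"
  using smp_range[of \<omega> t] by (simp add: g_def sum.delta')

lemma meas_g: "g t \<in> borel_measurable M"
proof -
  have "(\<lambda>\<omega>. \<Sum>i<n. if smp t \<omega> = i then gdir n fs' i (xh t \<omega>) (\<lambda>j. ah t j \<omega>) else 0) \<in> borel_measurable M"
    by (rule meas_G[OF xh_meas ah_meas smp_meas])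
  then show ?thesis by (rule measurable_cong[THEN iffD1, rotated]) (simp add: g_alt)
qed

lemma meas_x: "x t \<in> borel_measurable M"
  unfolding x_def using meas_g
  by (intro borel_measurable_diff borel_measurable_scaleR borel_measurable_const borel_measurable_sum) auto

end

context asaga
begin

definition past :: "nat \<Rightarrow> 'w \<Rightarrow> (nat \<Rightarrow> (real^'d) \<times> (nat \<Rightarrow> real^'d)) \<times> (nat \<Rightarrow> nat)" where
  "past t \<omega> = (\<lambda>s\<in>{..t}. (xh s \<omega>, \<lambda>j\<in>{..<n}. ah s j \<omega>), \<lambda>s\<in>{..<t}. smp s \<omega>)"

definition PS :: "nat \<Rightarrow> ((nat \<Rightarrow> (real^'d) \<times> (nat \<Rightarrow> real^'d)) \<times> (nat \<Rightarrow> nat)) measure" where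
  "PS t = PiM {..t} (\<lambda>_. borel \<Otimes>\<^sub>M PiM {..<n} (\<lambda>_. borel)) \<Otimes>\<^sub>M PiM {..<t} (\<lambda>_. count_space UNIV)"

lemma indep_t: "indep_set (sets (vimage_algebra (space M) (smp t) (count_space UNIV)))
                          (sets (vimage_algebra (space M) (past t) (PS t)))"
  using smp_indep[of t] unfolding past_def[abs_def] PS_def .

lemma past_space: "\<omega> \<in> space M \<Longrightarrow> past t \<omega> \<in> space (PS t)"
  by (auto simp: past_def PS_def space_pair_measure space_PiM)

lemma A_sets: "{\<omega> \<in> space M. smp t \<omega> = j} \<in> sets (vimage_algebra (space M) (smp t) (count_space UNIV))"
proof -
  have "smp t -` {j} \<inter> space M \<in> sets (vimage_algebra (space M) (smp t) (count_space UNIV))"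
    by (rule in_vimage_algebra) simp
  moreover have "smp t -` {j} \<inter> space M = {\<omega> \<in> space M. smp t \<omega> = j}" by auto
  ultimately show ?thesis by simp
qed

lemma indep_mult:
  fixes \<Phi> :: "'w \<Rightarrow> real"
  assumes \<psi>: "\<psi> \<in> borel_measurable (PS t)"
    and \<Phi>: "\<And>\<omega>. \<omega> \<in> space M \<Longrightarrow> \<Phi> \<omega> = \<psi> (past t \<omega>)"
    and fin: "finite (\<Phi> ` space M)"
    and j: "j < n"
  shows "integral\<^sup>L M (\<lambda>\<omega>. indicator {\<omega> \<in> space M. smp t \<omega> = j} \<omega> * \<Phi> \<omega>) = integral\<^sup>L M \<Phi> / real n"
    and "integrable M \<Phi>"
proof -
  define R where "R = \<Phi> ` space M"
  define B where "B c = {\<omega> \<in> space M. \<Phi> \<omega> = c}" for c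
  define AA where "AA = {\<omega> \<in> space M. smp t \<omega> = j}"
  have Bv: "B c \<in> sets (vimage_algebra (space M) (past t) (PS t))" for c
  proof -
    have "past t -` (\<psi> -` {c} \<inter> space (PS t)) \<inter> space M \<in> sets (vimage_algebra (space M) (past t) (PS t))"
      by (rule in_vimage_algebra) (rule measurable_sets[OF \<psi>], simp)
    moreover have "past t -` (\<psi> -` {c} \<inter> space (PS t)) \<inter> space M = B c"
      using past_space \<Phi> by (auto simp: B_def)
    ultimately show ?thesis by simp
  qed
  have Av: "AA \<in> sets (vimage_algebra (space M) (smp t) (count_space UNIV))"
    unfolding AA_def by (rule A_sets)
  have BM: "B c \<in> sets M" for c using indep_setD_ev2[OF indep_t] Bv by blast
  have AM: "AA \<in> sets M" using indep_setD_ev1[OF indep_t] Av by blast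
  have prA: "prob AA = 1 / real n" unfolding AA_def using smp_unif[OF j] .
  have ind: "prob (AA \<inter> B c) = prob AA * prob (B c)" for c
    by (rule indep_setD[OF indep_t Av Bv])
  have finR: "finite R" using fin by (simp add: R_def)
  have dec: "\<Phi> \<omega> = (\<Sum>c\<in>R. c * indicator (B c) \<omega>)" if "\<omega> \<in> space M" for \<omega>
  proof -
    have "(\<Sum>c\<in>R. c * indicator (B c) \<omega>) = (\<Sum>c\<in>R. if c = \<Phi> \<omega> then c else 0)"
      by (rule sum.cong) (auto simp: B_def that indicator_def)
    also have "\<dots> = \<Phi> \<omega>" using finR that by (simp add: R_def sum.delta)
    finally show ?thesis by simp
  qed
  have intc: "integrable M (\<lambda>\<omega>. c * indicator S \<omega>)" if "S \<in> sets M" for c :: real and S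
  proof -
    have "integrable M (indicat_real S)" using that
      by (intro integrable_real_indicator) (auto simp: emeasure_eq_measure)
    then show ?thesis by (rule integrable_mult_right[of c M "indicator S"])
  qed
  have "integrable M (\<lambda>\<omega>. \<Sum>c\<in>R. c * indicator (B c) \<omega>)"
    using BM intc by auto
  moreover have "integrable M \<Phi> \<longleftrightarrow> integrable M (\<lambda>\<omega>. \<Sum>c\<in>R. c * indicator (B c) \<omega>)"
    by (rule Bochner_Integration.integrable_cong) (auto simp: dec)
  ultimately show "integrable M \<Phi>" by simp
  have "integral\<^sup>L M \<Phi> = integral\<^sup>L M (\<lambda>\<omega>. \<Sum>c\<in>R. c * indicator (B c) \<omega>)"
    by (rule Bochner_Integration.integral_cong) (auto simp: dec)
  also have "\<dots> = (\<Sum>c\<in>R. integral\<^sup>L M (\<lambda>\<omega>. c * indicator (B c) \<omega>))"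
    using BM intc by (intro Bochner_Integration.integral_sum) auto
  also have "\<dots> = (\<Sum>c\<in>R. c * prob (B c))"
    using BM by (simp add: Int_absorb2 sets.sets_into_space)
  finally have E1: "integral\<^sup>L M \<Phi> = (\<Sum>c\<in>R. c * prob (B c))" .
  have "integral\<^sup>L M (\<lambda>\<omega>. indicator AA \<omega> * \<Phi> \<omega>) = integral\<^sup>L M (\<lambda>\<omega>. \<Sum>c\<in>R. c * indicator (AA \<inter> B c) \<omega>)"
    by (rule Bochner_Integration.integral_cong) (auto simp: dec sum_distrib_left indicator_inter_arith algebra_simps)
  also have "\<dots> = (\<Sum>c\<in>R. integral\<^sup>L M (\<lambda>\<omega>. c * indicator (AA \<inter> B c) \<omega>))"
    using BM AM intc by (intro Bochner_Integration.integral_sum) auto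
  also have "\<dots> = (\<Sum>c\<in>R. c * prob (AA \<inter> B c))"
    using BM AM by (simp add: Int_absorb2 sets.sets_into_space)
  also have "\<dots> = (\<Sum>c\<in>R. c * prob (B c)) / real n"
    by (simp add: ind prA sum_divide_distrib)
  finally show "integral\<^sup>L M (\<lambda>\<omega>. indicator {\<omega> \<in> space M. smp t \<omega> = j} \<omega> * \<Phi> \<omega>) = integral\<^sup>L M \<Phi> / real n"
    using E1 by (simp add: AA_def)
qed

end

lemma sc_grad_gen:
  fixes f :: "real^'d \<Rightarrow> real"
  assumes der: "(f has_derivative (\<lambda>h. D \<bullet> h)) (at y)"
    and sc: "strongly_convex_on \<mu> UNIV f"
  shows "f y - f z + \<mu> / 2 * (norm (y - z))\<^sup>2 \<le> (y - z) \<bullet> D"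
proof -
  define d where "d = z - y"
  define \<phi> where "\<phi> s = f (y + s *\<^sub>R d)" for s :: real
  have lin: "((\<lambda>s::real. y + s *\<^sub>R d) has_derivative (\<lambda>s. s *\<^sub>R d)) (at 0)"
    by (auto intro!: derivative_eq_intros)
  have "(\<phi> has_derivative (\<lambda>s. D \<bullet> (s *\<^sub>R d))) (at 0)"
    unfolding \<phi>_def using has_derivative_compose[OF lin, of f "\<lambda>h. D \<bullet> h"] der by simp
  moreover have "(\<lambda>s. D \<bullet> (s *\<^sub>R d)) = (*) (D \<bullet> d)" by (auto simp: fun_eq_iff)
  ultimately have "(\<phi> has_field_derivative (D \<bullet> d)) (at 0)"
    by (simp add: has_field_derivative_def mult.commute)
  then have "(\<phi> has_field_derivative (D \<bullet> d)) (at 0 within {0<..})"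
    by (rule has_field_derivative_at_within)
  then have lim1: "((\<lambda>s. (\<phi> s - \<phi> 0) / s) \<longlongrightarrow> D \<bullet> d) (at_right 0)"
    by (simp add: has_field_derivative_iff)
  have lim2: "((\<lambda>s. f z - f y - \<mu> / 2 * (1 - s) * (norm (y - z))\<^sup>2) \<longlongrightarrow> f z - f y - \<mu> / 2 * (1 - 0) * (norm (y - z))\<^sup>2) (at_right 0)"
    by (intro tendsto_intros)
  have ev: "\<forall>\<^sub>F s in at_right 0. (\<phi> s - \<phi> 0) / s \<le> f z - f y - \<mu> / 2 * (1 - s) * (norm (y - z))\<^sup>2"
    unfolding eventually_at_right_field
  proof (intro exI[of _ 1] conjI allI impI)
    fix s :: real assume s: "0 < s" "s < 1"
    have eq: "y + s *\<^sub>R d = (1 - s) *\<^sub>R y + s *\<^sub>R z" by (simp add: d_def algebra_simps)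
    have "\<phi> s \<le> (1 - s) * f y + s * f z - \<mu> / 2 * s * (1 - s) * (norm (y - z))\<^sup>2"
      using sc s unfolding strongly_convex_on_def \<phi>_def eq by auto
    moreover have "\<phi> 0 = f y" by (simp add: \<phi>_def)
    ultimately have "\<phi> s - \<phi> 0 \<le> s * (f z - f y - \<mu> / 2 * (1 - s) * (norm (y - z))\<^sup>2)"
      by (simp add: algebra_simps)
    then show "(\<phi> s - \<phi> 0) / s \<le> f z - f y - \<mu> / 2 * (1 - s) * (norm (y - z))\<^sup>2"
      using s by (simp add: divide_le_eq mult.commute)
  qed simp
  have "D \<bullet> d \<le> f z - f y - \<mu> / 2 * (1 - 0) * (norm (y - z))\<^sup>2"
    by (rule tendsto_le[OF _ lim2 lim1 ev]) simp
  moreover have "D \<bullet> d = - ((y - z) \<bullet> D)" by (simp add: d_def inner_commute inner_diff_left inner_diff_right)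
  ultimately show ?thesis by simp
qed

lemma favg_der:
  assumes "\<And>i. i < n \<Longrightarrow> (fs i has_derivative (\<lambda>h. fs' i y \<bullet> h)) (at y)"
  shows "(favg n fs has_derivative (\<lambda>h. ((\<Sum>i<n. fs' i y) /\<^sub>R real n) \<bullet> h)) (at y)"
proof -
  have "((\<lambda>x. \<Sum>i<n. fs i x) has_derivative (\<lambda>h. \<Sum>i<n. fs' i y \<bullet> h)) (at y)"
    by (rule has_derivative_sum) (use assms in auto)
  then have "((\<lambda>x. (\<Sum>i<n. fs i x) * inverse (real n)) has_derivative (\<lambda>h. (\<Sum>i<n. fs' i y \<bullet> h) * inverse (real n))) (at y)"
    by (rule has_derivative_mult_left)
  moreover have "(\<lambda>h. (\<Sum>i<n. fs' i y \<bullet> h) / real n) = (\<lambda>h. ((\<Sum>i<n. fs' i y) /\<^sub>R real n) \<bullet> h)"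
    by (simp add: inner_sum_left divide_inverse mult.commute)
  ultimately show ?thesis unfolding favg_def[abs_def] by (simp add: divide_inverse)
qed

context asaga
begin

definition Fp :: "real^'d \<Rightarrow> real^'d" where
  "Fp y = (\<Sum>i<n. fs' i y) /\<^sub>R real n"

lemma sc_grad: "favg n fs y - favg n fs xstar + \<mu> / 2 * (norm (y - xstar))\<^sup>2 \<le> (y - xstar) \<bullet> Fp y"
  unfolding Fp_def by (rule sc_grad_gen[OF favg_der strong]) (rule grad)

lemma sum_Dmat:
  assumes "\<And>j c. j < n \<Longrightarrow> c \<notin> supp fs' j \<Longrightarrow> b j $ c = 0"
  shows "(\<Sum>j<n. Dmat n fs' j ((\<Sum>k<n. b k) /\<^sub>R real n)) = (\<Sum>k<n. b k)"
proof (subst vec_eq_iff, intro allI)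
  fix c
  define K where "K = card {j \<in> {..<n}. c \<in> supp fs' j}"
  define S where "S = (\<Sum>k<n. b k $ c)"
  have "(\<Sum>j<n. Dmat n fs' j ((\<Sum>k<n. b k) /\<^sub>R real n)) $ c
        = (\<Sum>j<n. if c \<in> supp fs' j then (S / real n) / pv n fs' c else 0)"
  proof -
    have bc: "((\<Sum>k<n. b k) /\<^sub>R real n) $ c = S / real n"
      by (simp add: S_def sum_component divide_inverse mult.commute)
    show ?thesis unfolding sum_component Dmat_def vec_lambda_beta bc by (rule refl)
  qed
  also have "\<dots> = real K * ((S / real n) / pv n fs' c)"
    by (simp add: K_def sum.inter_filter[symmetric])
  also have "\<dots> = S"
  proof (cases "K = 0")
    case True
    then have "\<forall>j<n. c \<notin> supp fs' j" by (auto simp: K_def)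
    then have "S = 0" unfolding S_def by (intro sum.neutral) (auto simp: assms)
    then show ?thesis by simp
  next
    case False
    have pv: "pv n fs' c = real K / real n" by (simp add: pv_def K_def)
    show ?thesis using False n_pos unfolding pv by (simp add: field_simps)
  qed
  finally show "(\<Sum>j<n. Dmat n fs' j ((\<Sum>k<n. b k) /\<^sub>R real n)) $ c = (\<Sum>k<n. b k) $ c"
    by (simp add: S_def sum_component)
qed

lemma sum_gdir:
  assumes "\<And>j c. j < n \<Longrightarrow> c \<notin> supp fs' j \<Longrightarrow> b j $ c = 0"
  shows "(\<Sum>j<n. gdir n fs' j y b) = (\<Sum>j<n. fs' j y)"
  using sum_Dmat[OF assms] by (simp add: gdir_def sum.distrib sum_subtractf)

lemma meas_gdir:
  fixes X :: "'z \<Rightarrow> real^'d"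
  assumes i: "i < n" and X: "X \<in> borel_measurable N" and Y: "\<And>j. j < n \<Longrightarrow> Y j \<in> borel_measurable N"
  shows "(\<lambda>z. gdir n fs' i (X z) (\<lambda>j. Y j z)) \<in> borel_measurable N"
proof -
  have f1: "(\<lambda>z. fs' i (X z)) \<in> borel_measurable N"
    using i by (intro measurable_compose[OF X borel_measurable_continuous_onI[OF cont_fs']]) auto
  have f2: "(\<lambda>z. (\<Sum>k<n. Y k z) /\<^sub>R real n) \<in> borel_measurable N"
    using Y by (intro borel_measurable_scaleR borel_measurable_const borel_measurable_sum) auto
  have f3: "(\<lambda>z. Dmat n fs' i ((\<Sum>k<n. Y k z) /\<^sub>R real n)) \<in> borel_measurable N"
    by (rule measurable_compose[OF f2 borel_measurable_continuous_onI[OF cont_Dmat]])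
  show ?thesis
    unfolding gdir_def using f1 f3 Y[OF i]
    by (intro borel_measurable_add borel_measurable_diff) auto
qed

lemma fstPS: "fst \<in> PS t \<rightarrow>\<^sub>M PiM {..t} (\<lambda>_. (borel :: (real^'d) measure) \<Otimes>\<^sub>M PiM {..<n} (\<lambda>_. borel :: (real^'d) measure))"
  unfolding PS_def by (rule measurable_fst)

lemma compS: "s \<le> t \<Longrightarrow> (\<lambda>q. q s) \<in> PiM {..t} (\<lambda>_. (borel :: (real^'d) measure) \<Otimes>\<^sub>M PiM {..<n} (\<lambda>_. borel :: (real^'d) measure))
     \<rightarrow>\<^sub>M ((borel :: (real^'d) measure) \<Otimes>\<^sub>M PiM {..<n} (\<lambda>_. borel :: (real^'d) measure))"
  by (rule measurable_component_singleton) auto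

lemma pX': "s \<le> t \<Longrightarrow> (\<lambda>p. fst (fst p s)) \<in> borel_measurable (PS t)"
  by (rule measurable_compose[OF measurable_compose[OF fstPS compS] measurable_fst])

lemma pY: "s \<le> t \<Longrightarrow> j < n \<Longrightarrow> (\<lambda>p. snd (fst p s) j) \<in> borel_measurable (PS t)"
proof -
  assume st: "s \<le> t" and j: "j < n"
  have "(\<lambda>p. snd (fst p s)) \<in> PS t \<rightarrow>\<^sub>M PiM {..<n} (\<lambda>_. borel :: (real^'d) measure)"
    by (rule measurable_compose[OF measurable_compose[OF fstPS compS[OF st]] measurable_snd])
  moreover have "(\<lambda>q. q j) \<in> PiM {..<n} (\<lambda>_. borel :: (real^'d) measure) \<rightarrow>\<^sub>M borel"
    by (rule measurable_component_singleton) (use j in auto)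
  ultimately show ?thesis by (rule measurable_compose)
qed

lemma pI: "s < t \<Longrightarrow> (\<lambda>p. snd p s) \<in> measurable (PS t) (count_space UNIV)"
proof -
  assume st: "s < t"
  have "snd \<in> PS t \<rightarrow>\<^sub>M PiM {..<t} (\<lambda>_. count_space UNIV)"
    unfolding PS_def by (rule measurable_snd)
  moreover have "(\<lambda>q. q s) \<in> PiM {..<t} (\<lambda>_. count_space (UNIV :: nat set)) \<rightarrow>\<^sub>M count_space UNIV"
    by (rule measurable_component_singleton) (use st in auto)
  ultimately show ?thesis by (rule measurable_compose)
qed

end

context asaga
begin

lemma fin_ahr: "finite ((\<lambda>\<omega>. restrict (\<lambda>k. ah t k \<omega>) {..<n}) ` space M)"
proof -
  have "(\<lambda>\<omega>. restrict (\<lambda>k. ah t k \<omega>) {..<n}) ` space M \<subseteq> PiE {..<n} (\<lambda>k. (\<lambda>\<omega>. ah t k \<omega>) ` space M)"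
    by (rule image_subsetI) (simp add: restrict_PiE_iff)
  moreover have "finite (PiE {..<n} (\<lambda>k. (\<lambda>\<omega>. ah t k \<omega>) ` space M))"
    by (intro finite_PiE) (auto simp: fin_ah')
  ultimately show ?thesis by (rule finite_subset)
qed

lemma AJ_sets: "{\<omega> \<in> space M. smp t \<omega> = j} \<in> sets M"
  using indep_setD_ev1[OF indep_t] A_sets by blast

lemma E_inner:
  shows "integral\<^sup>L M (\<lambda>\<omega>. (xh t \<omega> - xstar) \<bullet> g t \<omega>) = integral\<^sup>L M (\<lambda>\<omega>. (xh t \<omega> - xstar) \<bullet> Fp (xh t \<omega>))"
proof -
  define \<Phi> where "\<Phi> j \<omega> = (xh t \<omega> - xstar) \<bullet> gdir n fs' j (xh t \<omega>) (\<lambda>k. ah t k \<omega>)" for j \<omega>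
  define AJ where "AJ j = {\<omega> \<in> space M. smp t \<omega> = j}" for j
  have key: "integral\<^sup>L M (\<lambda>\<omega>. indicator (AJ j) \<omega> * \<Phi> j \<omega>) = integral\<^sup>L M (\<Phi> j) / real n \<and> integrable M (\<Phi> j)"
    if j: "j < n" for j
  proof -
    define \<psi> where "\<psi> p = (fst (fst p t) - xstar) \<bullet> gdir n fs' j (fst (fst p t)) (\<lambda>k. snd (fst p t) k)"
      for p :: "(nat \<Rightarrow> (real^'d) \<times> (nat \<Rightarrow> real^'d)) \<times> (nat \<Rightarrow> nat)"
    have m: "\<psi> \<in> borel_measurable (PS t)"
      unfolding \<psi>_def
      by (intro borel_measurable_inner borel_measurable_diff borel_measurable_const pX' meas_gdir[OF j] pY) auto
    have gc: "gdir n fs' j (xh t \<omega>) (\<lambda>k. ah t k \<omega>) = gdir n fs' j (xh t \<omega>) (restrict (\<lambda>k. ah t k \<omega>) {..<n})" for \<omega>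
      by (rule gdir_cong[OF j]) simp
    have eq: "\<Phi> j \<omega> = \<psi> (past t \<omega>)" if "\<omega> \<in> space M" for \<omega>
      unfolding \<Phi>_def \<psi>_def past_def gc by simp
    have eq2: "\<Phi> j \<omega> = (\<lambda>y b. (y - xstar) \<bullet> gdir n fs' j y b) (xh t \<omega>) (restrict (\<lambda>k. ah t k \<omega>) {..<n})" for \<omega>
      unfolding \<Phi>_def gc by simp
    have fin: "finite (\<Phi> j ` space M)"
      unfolding eq2 by (rule fv_comp2[OF fin_xh fin_ahr])
    show ?thesis using indep_mult[OF m eq fin j] by (simp add: AJ_def)
  qed
  have pw: "(xh t \<omega> - xstar) \<bullet> g t \<omega> = (\<Sum>j<n. indicator (AJ j) \<omega> * \<Phi> j \<omega>)" if "\<omega> \<in> space M" for \<omega>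
    unfolding g_alt[OF that] \<Phi>_def AJ_def
    by (simp add: inner_sum_right indicator_def that)
  have intj: "integrable M (\<lambda>\<omega>. indicator (AJ j) \<omega> * \<Phi> j \<omega>)" if "j < n" for j
    using integrable_real_mult_indicator[OF AJ_sets[of t j] conjunct2[OF key[OF that]]]
    by (simp add: AJ_def mult.commute)
  have pw2: "(\<Sum>j<n. \<Phi> j \<omega> / real n) = (xh t \<omega> - xstar) \<bullet> Fp (xh t \<omega>)" if "\<omega> \<in> space M" for \<omega>
  proof -
    have "(\<Sum>j<n. \<Phi> j \<omega>) = (xh t \<omega> - xstar) \<bullet> (\<Sum>j<n. gdir n fs' j (xh t \<omega>) (\<lambda>k. ah t k \<omega>))"
      by (simp add: \<Phi>_def inner_sum_right)
    also have "\<dots> = (xh t \<omega> - xstar) \<bullet> (\<Sum>j<n. fs' j (xh t \<omega>))"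
      by (subst sum_gdir) (auto simp: ah_supp that)
    finally have h: "(\<Sum>j<n. \<Phi> j \<omega>) = (xh t \<omega> - xstar) \<bullet> (\<Sum>j<n. fs' j (xh t \<omega>))" .
    have "(\<Sum>j<n. \<Phi> j \<omega> / real n) = (\<Sum>j<n. \<Phi> j \<omega>) / real n"
      by (rule sum_divide_distrib[symmetric])
    also have "\<dots> = (xh t \<omega> - xstar) \<bullet> (\<Sum>j<n. fs' j (xh t \<omega>)) / real n" by (rule arg_cong[OF h])
    also have "\<dots> = (xh t \<omega> - xstar) \<bullet> Fp (xh t \<omega>)"
      by (simp add: Fp_def inner_scaleR_right divide_inverse mult.commute)
    finally show ?thesis .
  qed
  have "integral\<^sup>L M (\<lambda>\<omega>. (xh t \<omega> - xstar) \<bullet> g t \<omega>) = integral\<^sup>L M (\<lambda>\<omega>. \<Sum>j<n. indicator (AJ j) \<omega> * \<Phi> j \<omega>)"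
    by (rule Bochner_Integration.integral_cong) (auto simp: pw)
  also have "\<dots> = (\<Sum>j<n. integral\<^sup>L M (\<lambda>\<omega>. indicator (AJ j) \<omega> * \<Phi> j \<omega>))"
    by (rule Bochner_Integration.integral_sum) (auto simp: intj)
  also have "\<dots> = (\<Sum>j<n. integral\<^sup>L M (\<lambda>\<omega>. \<Phi> j \<omega> / real n))"
    by (rule sum.cong) (auto simp: key)
  also have "\<dots> = integral\<^sup>L M (\<lambda>\<omega>. \<Sum>j<n. \<Phi> j \<omega> / real n)"
    by (rule Bochner_Integration.integral_sum[symmetric]) (auto simp: key)
  also have "\<dots> = integral\<^sup>L M (\<lambda>\<omega>. (xh t \<omega> - xstar) \<bullet> Fp (xh t \<omega>))"
    by (rule Bochner_Integration.integral_cong) (auto simp: pw2)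
  finally show ?thesis .
qed

end

context asaga
begin

lemma pv_le: "pv n fs' c \<le> Delta n fs'"
proof -
  have "card {i \<in> {..<n}. c \<in> supp fs' i} \<le> Max (range (\<lambda>v::'d. card {i \<in> {..<n}. v \<in> supp fs' i}))"
    by (rule Max_ge) auto
  then show ?thesis unfolding pv_def Delta_def by (intro divide_right_mono) auto
qed

lemma Delta_nonneg: "0 \<le> Delta n fs'"
  by (simp add: Delta_def)

lemma Delta0:
  assumes "Delta n fs' = 0" "j < n"
  shows "c \<notin> supp fs' j"
proof
  assume c: "c \<in> supp fs' j"
  have "0 < pv n fs' c"
  proof -
    have "j \<in> {i \<in> {..<n}. c \<in> supp fs' i}" using c assms(2) by auto
    then have "card {i \<in> {..<n}. c \<in> supp fs' i} \<noteq> 0" by (auto simp: card_eq_0_iff)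
    then have "0 < card {i \<in> {..<n}. c \<in> supp fs' i}" by (simp only: neq0_conv)
    then have "0 < real (card {i \<in> {..<n}. c \<in> supp fs' i})" by (simp only: of_nat_0_less_iff)
    then show ?thesis unfolding pv_def using n_pos by (intro divide_pos_pos) auto
  qed
  then show False using pv_le[of c] assms(1) by simp
qed

lemma gc_meas[measurable]: "(\<lambda>\<omega>. g u \<omega> $ c) \<in> borel_measurable M"
  by (rule measurable_compose[OF meas_g borel_measurable_nth])

lemma g_meas'[measurable]: "g u \<in> borel_measurable M"
  by (rule meas_g)

lemma norm2_sum: "(norm (y::real^'d))\<^sup>2 = (\<Sum>c\<in>UNIV. (y $ c)\<^sup>2)"
  unfolding power2_norm_eq_inner inner_vec_def by (simp add: power2_eq_square)

definition Pf :: "nat \<Rightarrow> nat \<Rightarrow> 'w \<Rightarrow> real" where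
  "Pf u v \<omega> = (\<Sum>c\<in>UNIV. \<bar>g u \<omega> $ c\<bar> * \<bar>g v \<omega> $ c\<bar>)"

definition GG :: "nat \<Rightarrow> real" where
  "GG u = integral\<^sup>L M (\<lambda>\<omega>. (norm (g u \<omega>))\<^sup>2)"

lemma int_Pf: "integrable M (Pf u v)"
proof (rule fv_integrable)
  show "Pf u v \<in> borel_measurable M" unfolding Pf_def[abs_def] by measurable
  show "finite (Pf u v ` space M)"
    unfolding Pf_def[abs_def] by (rule fv_comp2[OF fin_g' fin_g'])
qed

lemma int_G: "integrable M (\<lambda>\<omega>. (norm (g u \<omega>))\<^sup>2)"
  by (rule fv_integrable) (measurable, rule fv_comp[OF fin_g'])

lemma int_gc2: "integrable M (\<lambda>\<omega>. (g u \<omega> $ c)\<^sup>2)"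
  by (rule fv_integrable) (measurable, rule fv_comp[OF fin_g'])

lemma GG_nonneg: "0 \<le> GG u"
  unfolding GG_def by (rule integral_nonneg_AE) simp

lemma E_ind:
  assumes uv: "u < v" and j: "j < n"
  shows "integral\<^sup>L M (\<lambda>\<omega>. indicator {\<omega> \<in> space M. smp v \<omega> = j} \<omega> * (g u \<omega> $ c)\<^sup>2)
         = integral\<^sup>L M (\<lambda>\<omega>. (g u \<omega> $ c)\<^sup>2) / real n"
proof -
  define Gp where "Gp p = (\<Sum>i<n. if snd p u = i then gdir n fs' i (fst (fst p u)) (\<lambda>k. snd (fst p u) k) else 0)"
    for p :: "(nat \<Rightarrow> (real^'d) \<times> (nat \<Rightarrow> real^'d)) \<times> (nat \<Rightarrow> nat)"
  define \<psi> where "\<psi> p = (Gp p $ c)\<^sup>2" for p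
  have mG: "Gp \<in> borel_measurable (PS v)"
    unfolding Gp_def[abs_def]
    by (rule meas_G[OF pX' pY pI]) (use uv in auto)
  have m: "\<psi> \<in> borel_measurable (PS v)"
    unfolding \<psi>_def[abs_def]
    by (intro borel_measurable_power measurable_compose[OF mG borel_measurable_nth])
  have eq: "(g u \<omega> $ c)\<^sup>2 = \<psi> (past v \<omega>)" if om: "\<omega> \<in> space M" for \<omega>
  proof -
    have "Gp (past v \<omega>) = (\<Sum>i<n. if smp u \<omega> = i then gdir n fs' i (xh u \<omega>) (restrict (\<lambda>k. ah u k \<omega>) {..<n}) else 0)"
      unfolding Gp_def past_def using uv by simp
    also have "\<dots> = g u \<omega>" using smp_range[OF om, of u] g_eq[OF om, of u] by (simp add: sum.delta')
    finally show ?thesis by (simp add: \<psi>_def)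
  qed
  have fin: "finite ((\<lambda>\<omega>. (g u \<omega> $ c)\<^sup>2) ` space M)" by (rule fv_comp[OF fin_g'])
  show ?thesis by (rule indep_mult(1)[OF m eq fin j])
qed

lemma E_Ind:
  assumes uv: "u < v"
  shows "integral\<^sup>L M (\<lambda>\<omega>. (if c \<in> supp fs' (smp v \<omega>) then 1 else 0) * (g u \<omega> $ c)\<^sup>2)
         \<le> Delta n fs' * integral\<^sup>L M (\<lambda>\<omega>. (g u \<omega> $ c)\<^sup>2)"
proof -
  define J where "J = {j \<in> {..<n}. c \<in> supp fs' j}"
  define E where "E = integral\<^sup>L M (\<lambda>\<omega>. (g u \<omega> $ c)\<^sup>2)"
  have E0: "0 \<le> E" unfolding E_def by (rule integral_nonneg_AE) simp
  have finJ: "finite J" by (simp add: J_def)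
  have pw: "(if c \<in> supp fs' (smp v \<omega>) then 1 else 0) * (g u \<omega> $ c)\<^sup>2
          = (\<Sum>j\<in>J. indicator {\<omega> \<in> space M. smp v \<omega> = j} \<omega> * (g u \<omega> $ c)\<^sup>2)" if om: "\<omega> \<in> space M" for \<omega>
  proof -
    have "(\<Sum>j\<in>J. indicator {\<omega> \<in> space M. smp v \<omega> = j} \<omega> * (g u \<omega> $ c)\<^sup>2)
        = (\<Sum>j\<in>J. if smp v \<omega> = j then (g u \<omega> $ c)\<^sup>2 else 0)"
      by (rule sum.cong) (auto simp: indicator_def om)
    also have "\<dots> = (if smp v \<omega> \<in> J then (g u \<omega> $ c)\<^sup>2 else 0)" using finJ by (simp add: sum.delta')
    also have "\<dots> = (if c \<in> supp fs' (smp v \<omega>) then 1 else 0) * (g u \<omega> $ c)\<^sup>2"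
      using smp_range[OF om, of v] by (simp add: J_def)
    finally show ?thesis by simp
  qed
  have intj: "integrable M (\<lambda>\<omega>. indicator {\<omega> \<in> space M. smp v \<omega> = j} \<omega> * (g u \<omega> $ c)\<^sup>2)" for j
    using integrable_real_mult_indicator[OF AJ_sets[of v j] int_gc2[of u c]] by (simp add: mult.commute)
  have "integral\<^sup>L M (\<lambda>\<omega>. (if c \<in> supp fs' (smp v \<omega>) then 1 else 0) * (g u \<omega> $ c)\<^sup>2)
      = integral\<^sup>L M (\<lambda>\<omega>. \<Sum>j\<in>J. indicator {\<omega> \<in> space M. smp v \<omega> = j} \<omega> * (g u \<omega> $ c)\<^sup>2)"
    by (rule Bochner_Integration.integral_cong) (auto simp: pw)
  also have "\<dots> = (\<Sum>j\<in>J. integral\<^sup>L M (\<lambda>\<omega>. indicator {\<omega> \<in> space M. smp v \<omega> = j} \<omega> * (g u \<omega> $ c)\<^sup>2))"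
    by (rule Bochner_Integration.integral_sum) (rule intj)
  also have "\<dots> = (\<Sum>j\<in>J. E / real n)"
    by (rule sum.cong) (auto simp: J_def E_def E_ind[OF uv])
  also have "\<dots> = pv n fs' c * E" by (simp add: pv_def J_def)
  also have "\<dots> \<le> Delta n fs' * E" by (rule mult_right_mono[OF pv_le E0])
  finally show ?thesis by (simp add: E_def)
qed

end

lemma amgm_r:
  fixes a b r :: real
  assumes r: "0 < r"
  shows "\<bar>a\<bar> * \<bar>b\<bar> \<le> a\<^sup>2 / (2 * r) + r / 2 * b\<^sup>2"
proof -
  have "0 \<le> (\<bar>a\<bar> - r * \<bar>b\<bar>)\<^sup>2" by simp
  then have h: "2 * r * (\<bar>a\<bar> * \<bar>b\<bar>) \<le> a\<^sup>2 + r\<^sup>2 * b\<^sup>2"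
    by (simp add: power2_eq_square algebra_simps)
  have "\<bar>a\<bar> * \<bar>b\<bar> \<le> (a\<^sup>2 + r\<^sup>2 * b\<^sup>2) / (2 * r)"
    using h r by (simp add: pos_le_divide_eq mult.commute mult.left_commute)
  also have "\<dots> = a\<^sup>2 / (2 * r) + r / 2 * b\<^sup>2"
    using r by (simp add: field_simps power2_eq_square)
  finally show ?thesis .
qed

context asaga
begin

lemma GG_sum: "GG u = (\<Sum>c\<in>UNIV. integral\<^sup>L M (\<lambda>\<omega>. (g u \<omega> $ c)\<^sup>2))"
  unfolding GG_def norm2_sum
  by (rule Bochner_Integration.integral_sum) (rule int_gc2)

lemma int_Ind: "integrable M (\<lambda>\<omega>. (if c \<in> supp fs' (smp v \<omega>) then 1 else 0) * (g u \<omega> $ c)\<^sup>2)"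
proof (rule fv_integrable)
  have h: "(\<lambda>i. if c \<in> supp fs' i then 1 else 0 :: real) \<in> count_space UNIV \<rightarrow>\<^sub>M borel"
    by (simp add: measurable_count_space_eq1)
  have "(\<lambda>\<omega>. (\<lambda>i. if c \<in> supp fs' i then 1 else 0 :: real) (smp v \<omega>)) \<in> borel_measurable M"
    by (rule measurable_compose[OF smp_meas h])
  then show "(\<lambda>\<omega>. (if c \<in> supp fs' (smp v \<omega>) then 1 else 0) * (g u \<omega> $ c)\<^sup>2) \<in> borel_measurable M"
    by (intro borel_measurable_times) (auto)
  show "finite ((\<lambda>\<omega>. (if c \<in> supp fs' (smp v \<omega>) then 1 else 0) * (g u \<omega> $ c)\<^sup>2) ` space M)"
    by (rule fv_comp2[OF fv_smp fin_g'])
qed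

lemma P_bound:
  assumes uv: "u < v"
  shows "integral\<^sup>L M (Pf u v) \<le> sqrt (Delta n fs') / 2 * (GG u + GG v)"
proof (cases "Delta n fs' = 0")
  case True
  have "Pf u v \<omega> = 0" if om: "\<omega> \<in> space M" for \<omega>
  proof -
    have "g v \<omega> $ c = 0" for c
      by (rule g_supp[OF om]) (rule Delta0[OF True smp_range[OF om]])
    then show ?thesis by (simp add: Pf_def)
  qed
  then have "integral\<^sup>L M (Pf u v) = integral\<^sup>L M (\<lambda>_. 0::real)"
    by (intro Bochner_Integration.integral_cong) auto
  then show ?thesis using True by simp
next
  case False
  define r where "r = sqrt (Delta n fs')"
  have r0: "0 < r" using False Delta_nonneg by (simp add: r_def)
  have r2: "r\<^sup>2 = Delta n fs'" using Delta_nonneg by (simp add: r_def)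
  define Ic where "Ic c \<omega> = (if c \<in> supp fs' (smp v \<omega>) then 1 else 0) * (g u \<omega> $ c)\<^sup>2" for c \<omega>
  define R where "R \<omega> = 1 / (2 * r) * (\<Sum>c\<in>UNIV. Ic c \<omega>) + r / 2 * (norm (g v \<omega>))\<^sup>2" for \<omega>
  have intIc: "integrable M (Ic c)" for c unfolding Ic_def[abs_def] by (rule int_Ind)
  have intR: "integrable M R" unfolding R_def using intIc int_G by auto
  have pw: "Pf u v \<omega> \<le> R \<omega>" if om: "\<omega> \<in> space M" for \<omega>
  proof -
    have "Pf u v \<omega> \<le> (\<Sum>c\<in>UNIV. 1 / (2 * r) * Ic c \<omega> + r / 2 * (g v \<omega> $ c)\<^sup>2)"
      unfolding Pf_def
    proof (rule sum_mono)
      fix c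
      show "\<bar>g u \<omega> $ c\<bar> * \<bar>g v \<omega> $ c\<bar> \<le> 1 / (2 * r) * Ic c \<omega> + r / 2 * (g v \<omega> $ c)\<^sup>2"
      proof (cases "c \<in> supp fs' (smp v \<omega>)")
        case True
        then show ?thesis using amgm_r[OF r0, of "g u \<omega> $ c" "g v \<omega> $ c"] by (simp add: Ic_def)
      next
        case False
        then show ?thesis using g_supp[OF om False] r0 by (simp add: Ic_def)
      qed
    qed
    also have "\<dots> = R \<omega>"
      by (simp add: R_def norm2_sum sum.distrib sum_distrib_left)
    finally show ?thesis .
  qed
  have "integral\<^sup>L M (Pf u v) \<le> integral\<^sup>L M R"
    by (rule Bochner_Integration.integral_mono[OF int_Pf intR pw])
  also have "integral\<^sup>L M R = 1 / (2 * r) * (\<Sum>c\<in>UNIV. integral\<^sup>L M (Ic c)) + r / 2 * GG v"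
  proof -
    have "integral\<^sup>L M R = integral\<^sup>L M (\<lambda>\<omega>. 1 / (2 * r) * (\<Sum>c\<in>UNIV. Ic c \<omega>)) + integral\<^sup>L M (\<lambda>\<omega>. r / 2 * (norm (g v \<omega>))\<^sup>2)"
      unfolding R_def using intIc int_G by (intro Bochner_Integration.integral_add) auto
    also have "integral\<^sup>L M (\<lambda>\<omega>. 1 / (2 * r) * (\<Sum>c\<in>UNIV. Ic c \<omega>)) = 1 / (2 * r) * (\<Sum>c\<in>UNIV. integral\<^sup>L M (Ic c))"
      using intIc by (simp add: Bochner_Integration.integral_sum)
    also have "integral\<^sup>L M (\<lambda>\<omega>. r / 2 * (norm (g v \<omega>))\<^sup>2) = r / 2 * GG v"
      by (simp add: GG_def)
    finally show ?thesis .
  qed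
  also have "\<dots> \<le> 1 / (2 * r) * (Delta n fs' * GG u) + r / 2 * GG v"
  proof -
    have "(\<Sum>c\<in>UNIV. integral\<^sup>L M (Ic c)) \<le> (\<Sum>c\<in>UNIV. Delta n fs' * integral\<^sup>L M (\<lambda>\<omega>. (g u \<omega> $ c)\<^sup>2))"
      unfolding Ic_def[abs_def] by (rule sum_mono) (rule E_Ind[OF uv])
    also have "\<dots> = Delta n fs' * GG u" by (simp add: GG_sum sum_distrib_left)
    finally show ?thesis using r0 by (intro add_right_mono mult_left_mono) auto
  qed
  also have "\<dots> = sqrt (Delta n fs') / 2 * (GG u + GG v)"
    using r0 unfolding r2[symmetric] by (simp add: r_def[symmetric] field_simps power2_eq_square)
  finally show ?thesis .
qed

end

context asaga
begin

lemma x_Suc: "x (Suc t) \<omega> = x t \<omega> - \<gamma> *\<^sub>R g t \<omega>"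
  unfolding x_def by (simp add: algebra_simps)

lemma x_comp: "x t \<omega> $ c = x0 $ c - \<gamma> * (\<Sum>u<t. g u \<omega> $ c)"
  unfolding x_def by (simp add: sum_component)

lemma diffc:
  assumes om: "\<omega> \<in> space M"
  shows "\<bar>(xh t \<omega> - x t \<omega>) $ c\<bar> \<le> \<gamma> * (\<Sum>u\<in>{t - \<tau>..<t}. \<bar>g u \<omega> $ c\<bar>)"
proof -
  define U where "U = {u. u < t \<and> c \<in> supp fs' (smp u \<omega>) \<and> rd t u c \<omega>}"
  have sU: "(\<Sum>u\<in>U. g u \<omega> $ c) = (\<Sum>u<t. if u \<in> U then g u \<omega> $ c else 0)"
  proof -
    have "U = {..<t} \<inter> U" by (auto simp: U_def)
    then have "(\<Sum>u\<in>U. g u \<omega> $ c) = (\<Sum>u\<in>{..<t} \<inter> U. g u \<omega> $ c)" by simp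
    also have "\<dots> = (\<Sum>u<t. if u \<in> U then g u \<omega> $ c else 0)" by (rule sum.inter_restrict) simp
    finally show ?thesis .
  qed
  have "(xh t \<omega> - x t \<omega>) $ c = \<gamma> * ((\<Sum>u<t. g u \<omega> $ c) - (\<Sum>u\<in>U. g u \<omega> $ c))"
    using xh_read[OF om, of t c] by (simp add: x_comp U_def algebra_simps)
  also have "\<dots> = \<gamma> * (\<Sum>u<t. if u \<in> U then 0 else g u \<omega> $ c)"
    unfolding sU by (simp add: sum_subtractf[symmetric] if_distrib cong: if_cong)
  finally have eq: "(xh t \<omega> - x t \<omega>) $ c = \<gamma> * (\<Sum>u<t. if u \<in> U then 0 else g u \<omega> $ c)" .
  have "\<bar>\<Sum>u<t. if u \<in> U then 0 else g u \<omega> $ c\<bar> \<le> (\<Sum>u<t. \<bar>if u \<in> U then 0 else g u \<omega> $ c\<bar>)"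
    by (rule sum_abs)
  also have "\<dots> \<le> (\<Sum>u<t. if u \<in> {t - \<tau>..<t} then \<bar>g u \<omega> $ c\<bar> else 0)"
  proof (rule sum_mono)
    fix u assume u: "u \<in> {..<t}"
    show "\<bar>if u \<in> U then 0 else g u \<omega> $ c\<bar> \<le> (if u \<in> {t - \<tau>..<t} then \<bar>g u \<omega> $ c\<bar> else 0)"
    proof (cases "u \<in> {t - \<tau>..<t}")
      case False
      then have "u + \<tau> + 1 \<le> t" using u by auto
      then have rd: "rd t u c \<omega>" by (rule overlap_x[OF om])
      show ?thesis
      proof (cases "c \<in> supp fs' (smp u \<omega>)")
        case True then show ?thesis using rd u False by (simp add: U_def)
      next
        case False2: False then show ?thesis using g_supp[OF om False2] False by simp
      qed
    qed auto
  qed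
  also have "\<dots> = (\<Sum>u\<in>{t - \<tau>..<t}. \<bar>g u \<omega> $ c\<bar>)"
  proof -
    have "(\<Sum>u<t. if u \<in> {t - \<tau>..<t} then \<bar>g u \<omega> $ c\<bar> else 0) = (\<Sum>u\<in>{..<t} \<inter> {t - \<tau>..<t}. \<bar>g u \<omega> $ c\<bar>)"
      by (rule sum.inter_restrict[symmetric]) simp
    also have "{..<t} \<inter> {t - \<tau>..<t} = {t - \<tau>..<t}" by auto
    finally show ?thesis .
  qed
  finally have "\<bar>\<Sum>u<t. if u \<in> U then 0 else g u \<omega> $ c\<bar> \<le> (\<Sum>u\<in>{t - \<tau>..<t}. \<bar>g u \<omega> $ c\<bar>)" .
  then show ?thesis unfolding eq using gamma_pos by (simp add: abs_mult mult_left_mono)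
qed

lemma inner_bound:
  assumes om: "\<omega> \<in> space M"
  shows "(xh t \<omega> - x t \<omega>) \<bullet> g t \<omega> \<le> \<gamma> * (\<Sum>u\<in>{t - \<tau>..<t}. Pf u t \<omega>)"
proof -
  have "(xh t \<omega> - x t \<omega>) \<bullet> g t \<omega> \<le> \<bar>(xh t \<omega> - x t \<omega>) \<bullet> g t \<omega>\<bar>" by simp
  also have "\<dots> \<le> (\<Sum>c\<in>UNIV. \<bar>(xh t \<omega> - x t \<omega>) $ c\<bar> * \<bar>g t \<omega> $ c\<bar>)"
    unfolding inner_vec_def by (rule order_trans[OF sum_abs]) (simp add: abs_mult)
  also have "\<dots> \<le> (\<Sum>c\<in>UNIV. \<gamma> * (\<Sum>u\<in>{t - \<tau>..<t}. \<bar>g u \<omega> $ c\<bar>) * \<bar>g t \<omega> $ c\<bar>)"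
    by (rule sum_mono) (rule mult_right_mono[OF diffc[OF om]], simp)
  also have "\<dots> = \<gamma> * (\<Sum>u\<in>{t - \<tau>..<t}. Pf u t \<omega>)"
    unfolding Pf_def by (simp add: sum_distrib_left sum_distrib_right sum.swap[of _ UNIV] mult.assoc)
  finally show ?thesis .
qed

lemma sq_bound:
  assumes om: "\<omega> \<in> space M"
  shows "(norm (xh t \<omega> - x t \<omega>))\<^sup>2 \<le> \<gamma>\<^sup>2 * (\<Sum>u\<in>{t - \<tau>..<t}. \<Sum>u'\<in>{t - \<tau>..<t}. Pf u u' \<omega>)"
proof -
  have "(norm (xh t \<omega> - x t \<omega>))\<^sup>2 = (\<Sum>c\<in>UNIV. \<bar>(xh t \<omega> - x t \<omega>) $ c\<bar>\<^sup>2)" by (simp add: norm2_sum)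
  also have "\<dots> \<le> (\<Sum>c\<in>UNIV. (\<gamma> * (\<Sum>u\<in>{t - \<tau>..<t}. \<bar>g u \<omega> $ c\<bar>))\<^sup>2)"
    by (rule sum_mono) (rule power_mono[OF diffc[OF om] abs_ge_zero])
  also have "\<dots> = (\<Sum>c\<in>UNIV. \<gamma>\<^sup>2 * (\<Sum>u\<in>{t - \<tau>..<t}. \<Sum>u'\<in>{t - \<tau>..<t}. \<bar>g u \<omega> $ c\<bar> * \<bar>g u' \<omega> $ c\<bar>))"
    by (rule sum.cong[OF refl]) (simp only: power2_eq_square sum_product[symmetric] ac_simps)
  also have "\<dots> = \<gamma>\<^sup>2 * (\<Sum>c\<in>UNIV. \<Sum>u\<in>{t - \<tau>..<t}. \<Sum>u'\<in>{t - \<tau>..<t}. \<bar>g u \<omega> $ c\<bar> * \<bar>g u' \<omega> $ c\<bar>)"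
    by (simp only: sum_distrib_left)
  also have "(\<Sum>c\<in>UNIV. \<Sum>u\<in>{t - \<tau>..<t}. \<Sum>u'\<in>{t - \<tau>..<t}. \<bar>g u \<omega> $ c\<bar> * \<bar>g u' \<omega> $ c\<bar>)
      = (\<Sum>u\<in>{t - \<tau>..<t}. \<Sum>c\<in>UNIV. \<Sum>u'\<in>{t - \<tau>..<t}. \<bar>g u \<omega> $ c\<bar> * \<bar>g u' \<omega> $ c\<bar>)"
    by (rule sum.swap)
  also have "\<dots> = (\<Sum>u\<in>{t - \<tau>..<t}. \<Sum>u'\<in>{t - \<tau>..<t}. Pf u u' \<omega>)"
    unfolding Pf_def by (rule sum.cong[OF refl]) (rule sum.swap)
  finally show ?thesis .
qed

lemma norm_diff_le: "(norm (p - q :: real^'d))\<^sup>2 \<le> 2 * (norm p)\<^sup>2 + 2 * (norm q)\<^sup>2"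
proof -
  have "0 \<le> (norm (p + q))\<^sup>2" by simp
  then show ?thesis
    by (simp add: power2_norm_eq_inner inner_add_left inner_add_right inner_diff_left inner_diff_right inner_commute)
qed

end

context asaga
begin

lemma cont_Fp: "continuous_on UNIV Fp"
  unfolding Fp_def[abs_def]
  by (intro continuous_on_scaleR continuous_on_sum continuous_on_const) (auto simp: cont_fs')

lemma xh_meas'[measurable]: "xh t \<in> borel_measurable M" by (rule xh_meas)
lemma x_meas'[measurable]: "x t \<in> borel_measurable M" by (rule meas_x)

lemma Fp_meas[measurable]: "(\<lambda>\<omega>. Fp (xh t \<omega>)) \<in> borel_measurable M"
  by (rule measurable_compose[OF xh_meas borel_measurable_continuous_onI[OF cont_Fp]])

lemma favg_meas[measurable]: "(\<lambda>\<omega>. favg n fs (xh t \<omega>)) \<in> borel_measurable M"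
  by (rule measurable_compose[OF xh_meas borel_measurable_continuous_onI[OF cont_favg]])

lemma int_N: "integrable M (\<lambda>\<omega>. (norm (x t \<omega> - xstar))\<^sup>2)"
  by (rule fv_integrable) (measurable, rule fv_comp[OF fv_x])

lemma int_3: "integrable M (\<lambda>\<omega>. (xh t \<omega> - xstar) \<bullet> g t \<omega>)"
  by (rule fv_integrable) (measurable, rule fv_comp2[OF fin_xh fin_g'])

lemma int_4: "integrable M (\<lambda>\<omega>. (xh t \<omega> - x t \<omega>) \<bullet> g t \<omega>)"
proof (rule fv_integrable)
  show "(\<lambda>\<omega>. (xh t \<omega> - x t \<omega>) \<bullet> g t \<omega>) \<in> borel_measurable M" by measurable
  have "finite ((\<lambda>\<omega>. xh t \<omega> - x t \<omega>) ` space M)" by (rule fv_comp2[OF fin_xh fv_x])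
  then show "finite ((\<lambda>\<omega>. (xh t \<omega> - x t \<omega>) \<bullet> g t \<omega>) ` space M)" by (rule fv_comp2[OF _ fin_g'])
qed

lemma int_6: "integrable M (\<lambda>\<omega>. (xh t \<omega> - xstar) \<bullet> Fp (xh t \<omega>))"
  by (rule fv_integrable) (measurable, rule fv_comp[OF fin_xh])

lemma int_7: "integrable M (\<lambda>\<omega>. favg n fs (xh t \<omega>))"
  by (rule fv_integrable) (measurable, rule fv_comp[OF fin_xh])

lemma int_8: "integrable M (\<lambda>\<omega>. (norm (xh t \<omega> - x t \<omega>))\<^sup>2)"
  by (rule fv_integrable) (measurable, rule fv_comp2[OF fin_xh fv_x])

lemma Pf_self: "Pf u u \<omega> = (norm (g u \<omega>))\<^sup>2"
  unfolding Pf_def norm2_sum by (rule sum.cong) (auto simp: power2_eq_square abs_mult_self_eq)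

lemma Pf_sym: "Pf u v \<omega> = Pf v u \<omega>"
  by (simp add: Pf_def mult.commute)

lemma EPf_bound:
  "integral\<^sup>L M (Pf u v) \<le> (if u = v then GG u else 0) + sqrt (Delta n fs') / 2 * (GG u + GG v)"
proof -
  have nn: "0 \<le> sqrt (Delta n fs') / 2 * (GG u + GG v)"
    using GG_nonneg[of u] GG_nonneg[of v] Delta_nonneg by simp
  consider "u = v" | "u < v" | "v < u" by linarith
  then show ?thesis
  proof cases
    case 1
    have "Pf u u = (\<lambda>\<omega>. (norm (g u \<omega>))\<^sup>2)" by (rule ext) (rule Pf_self)
    then have "integral\<^sup>L M (Pf u v) = GG u" using 1 by (simp add: GG_def)
    then show ?thesis using 1 nn by simp
  next
    case 2 then show ?thesis using P_bound[OF 2] by simp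
  next
    case 3
    have "Pf u v = Pf v u" by (simp add: fun_eq_iff Pf_sym)
    then show ?thesis using P_bound[OF 3] 3 by (simp add: add.commute)
  qed
qed

lemma main:
  "a (t + 1) \<le> (1 - \<gamma> * \<mu> / 2) * a t
           + \<gamma>\<^sup>2 * (1 + sqrt (Delta n fs') * real \<tau>) * integral\<^sup>L M (\<lambda>\<omega>. (norm (g t \<omega>))\<^sup>2)
           + \<gamma>\<^sup>2 * (sqrt (Delta n fs') + \<gamma> * \<mu> * (1 + sqrt (Delta n fs') * real \<tau>))
               * (\<Sum>u\<in>{t - \<tau>..<t}. integral\<^sup>L M (\<lambda>\<omega>. (norm (g u \<omega>))\<^sup>2))
           - 2 * \<gamma> * e t"
proof -
  define W where "W = {t - \<tau>..<t}"
  define r where "r = sqrt (Delta n fs')"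
  define K where "K = real (card W)"
  define S where "S = (\<Sum>u\<in>W. GG u)"
  define Gt where "Gt = GG t"
  define E4 where "E4 = integral\<^sup>L M (\<lambda>\<omega>. (xh t \<omega> - x t \<omega>) \<bullet> g t \<omega>)"
  define E6 where "E6 = integral\<^sup>L M (\<lambda>\<omega>. (xh t \<omega> - xstar) \<bullet> Fp (xh t \<omega>))"
  define E8 where "E8 = integral\<^sup>L M (\<lambda>\<omega>. (norm (xh t \<omega> - x t \<omega>))\<^sup>2)"
  have r0: "0 \<le> r" using Delta_nonneg by (simp add: r_def)
  have K0: "0 \<le> K" by (simp add: K_def)
  have Kt: "K \<le> real \<tau>" by (simp add: K_def W_def)
  have S0: "0 \<le> S" unfolding S_def by (rule sum_nonneg) (rule GG_nonneg)
  have Gt0: "0 \<le> Gt" unfolding Gt_def by (rule GG_nonneg)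
  have Wlt: "u \<in> W \<Longrightarrow> u < t" for u by (simp add: W_def)
  have pw: "(norm (x (t + 1) \<omega> - xstar))\<^sup>2 = (norm (x t \<omega> - xstar))\<^sup>2 - 2 * \<gamma> * ((xh t \<omega> - xstar) \<bullet> g t \<omega>)
            + 2 * \<gamma> * ((xh t \<omega> - x t \<omega>) \<bullet> g t \<omega>) + \<gamma>\<^sup>2 * (norm (g t \<omega>))\<^sup>2" for \<omega>
  proof -
    have e1: "x (t + 1) \<omega> - xstar = (x t \<omega> - xstar) - \<gamma> *\<^sub>R g t \<omega>" by (simp add: x_Suc)
    have n1: "(norm ((x t \<omega> - xstar) - \<gamma> *\<^sub>R g t \<omega>))\<^sup>2 = (norm (x t \<omega> - xstar))\<^sup>2 - 2 * \<gamma> * ((x t \<omega> - xstar) \<bullet> g t \<omega>) + \<gamma>\<^sup>2 * (norm (g t \<omega>))\<^sup>2"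
      unfolding power2_norm_eq_inner
      by (simp add: inner_diff_left inner_diff_right inner_commute algebra_simps power2_eq_square)
    have n2: "(x t \<omega> - xstar) \<bullet> g t \<omega> = (xh t \<omega> - xstar) \<bullet> g t \<omega> - (xh t \<omega> - x t \<omega>) \<bullet> g t \<omega>"
      by (simp add: inner_diff_left)
    show ?thesis unfolding e1 n1 n2 by (simp add: algebra_simps)
  qed
  have id: "a (t + 1) = a t - 2 * \<gamma> * E6 + 2 * \<gamma> * E4 + \<gamma>\<^sup>2 * Gt"
  proof -
    have "a (t + 1) = integral\<^sup>L M (\<lambda>\<omega>. (norm (x t \<omega> - xstar))\<^sup>2 - 2 * \<gamma> * ((xh t \<omega> - xstar) \<bullet> g t \<omega>)
            + 2 * \<gamma> * ((xh t \<omega> - x t \<omega>) \<bullet> g t \<omega>) + \<gamma>\<^sup>2 * (norm (g t \<omega>))\<^sup>2)"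
      unfolding a_def by (simp only: pw)
    also have "\<dots> = a t - 2 * \<gamma> * integral\<^sup>L M (\<lambda>\<omega>. (xh t \<omega> - xstar) \<bullet> g t \<omega>) + 2 * \<gamma> * E4 + \<gamma>\<^sup>2 * Gt"
      using int_N[of t] int_3[of t] int_4[of t] int_G[of t]
      by (simp add: a_def E4_def Gt_def GG_def)
    finally show ?thesis by (simp add: E_inner E6_def)
  qed
  have e6: "e t + \<mu> / 4 * a t - \<mu> / 2 * E8 \<le> E6"
  proof -
    have pw6: "favg n fs (xh t \<omega>) - favg n fs xstar + \<mu> / 4 * (norm (x t \<omega> - xstar))\<^sup>2 - \<mu> / 2 * (norm (xh t \<omega> - x t \<omega>))\<^sup>2
               \<le> (xh t \<omega> - xstar) \<bullet> Fp (xh t \<omega>)" for \<omega>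
    proof -
      have "x t \<omega> - xstar = (xh t \<omega> - xstar) - (xh t \<omega> - x t \<omega>)" by simp
      then have "(norm (x t \<omega> - xstar))\<^sup>2 \<le> 2 * (norm (xh t \<omega> - xstar))\<^sup>2 + 2 * (norm (xh t \<omega> - x t \<omega>))\<^sup>2"
        using norm_diff_le[of "xh t \<omega> - xstar" "xh t \<omega> - x t \<omega>"] by simp
      then have "\<mu> / 4 * (norm (x t \<omega> - xstar))\<^sup>2 \<le> \<mu> / 4 * (2 * (norm (xh t \<omega> - xstar))\<^sup>2 + 2 * (norm (xh t \<omega> - x t \<omega>))\<^sup>2)"
        using mu_pos by (intro mult_left_mono) auto
      then show ?thesis using sc_grad[of "xh t \<omega>"] by (simp add: algebra_simps)
    qed
    have "integral\<^sup>L M (\<lambda>\<omega>. favg n fs (xh t \<omega>) - favg n fs xstar + \<mu> / 4 * (norm (x t \<omega> - xstar))\<^sup>2 - \<mu> / 2 * (norm (xh t \<omega> - x t \<omega>))\<^sup>2) \<le> E6"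
      unfolding E6_def using int_7[of t] int_N[of t] int_8[of t] int_6[of t]
      by (intro Bochner_Integration.integral_mono pw6) auto
    moreover have "integral\<^sup>L M (\<lambda>\<omega>. favg n fs (xh t \<omega>) - favg n fs xstar + \<mu> / 4 * (norm (x t \<omega> - xstar))\<^sup>2 - \<mu> / 2 * (norm (xh t \<omega> - x t \<omega>))\<^sup>2)
        = e t + \<mu> / 4 * a t - \<mu> / 2 * E8"
      using int_7[of t] int_N[of t] int_8[of t]
      by (simp add: e_def a_def E8_def prob_space)
    ultimately show ?thesis by simp
  qed
  have e4: "E4 \<le> \<gamma> * (r / 2 * (S + K * Gt))"
  proof -
    have "E4 \<le> integral\<^sup>L M (\<lambda>\<omega>. \<gamma> * (\<Sum>u\<in>W. Pf u t \<omega>))"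
      unfolding E4_def W_def using int_4[of t] int_Pf
      by (intro Bochner_Integration.integral_mono inner_bound) auto
    also have "\<dots> = \<gamma> * (\<Sum>u\<in>W. integral\<^sup>L M (Pf u t))"
      using int_Pf by (simp add: Bochner_Integration.integral_sum)
    also have "\<dots> \<le> \<gamma> * (\<Sum>u\<in>W. r / 2 * (GG u + Gt))"
      using gamma_pos P_bound Wlt by (intro mult_left_mono sum_mono) (auto simp: r_def Gt_def)
    also have "(\<Sum>u\<in>W. r / 2 * (GG u + Gt)) = r / 2 * (S + K * Gt)"
    proof -
      have "(\<Sum>u\<in>W. r / 2 * (GG u + Gt)) = r / 2 * (\<Sum>u\<in>W. GG u + Gt)"
        by (rule sum_distrib_left[symmetric])
      also have "(\<Sum>u\<in>W. GG u + Gt) = S + K * Gt" by (simp add: sum.distrib S_def K_def)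
      finally show ?thesis .
    qed
    finally show ?thesis .
  qed
  have e8: "E8 \<le> \<gamma>\<^sup>2 * (S + r * K * S)"
  proof -
    have "E8 \<le> integral\<^sup>L M (\<lambda>\<omega>. \<gamma>\<^sup>2 * (\<Sum>u\<in>W. \<Sum>u'\<in>W. Pf u u' \<omega>))"
      unfolding E8_def W_def using int_8[of t] int_Pf
      by (intro Bochner_Integration.integral_mono sq_bound) auto
    also have "\<dots> = \<gamma>\<^sup>2 * (\<Sum>u\<in>W. \<Sum>u'\<in>W. integral\<^sup>L M (Pf u u'))"
      using int_Pf by (simp add: Bochner_Integration.integral_sum)
    also have "\<dots> \<le> \<gamma>\<^sup>2 * (\<Sum>u\<in>W. \<Sum>u'\<in>W. (if u = u' then GG u else 0) + r / 2 * (GG u + GG u'))"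
      unfolding r_def by (intro mult_left_mono sum_mono EPf_bound) auto
    also have "(\<Sum>u\<in>W. \<Sum>u'\<in>W. (if u = u' then GG u else 0) + r / 2 * (GG u + GG u')) = S + r * K * S"
    proof -
      have "(\<Sum>u\<in>W. \<Sum>u'\<in>W. (if u = u' then GG u else 0) + r / 2 * (GG u + GG u'))
          = (\<Sum>u\<in>W. GG u + r / 2 * (K * GG u + S))"
      proof (rule sum.cong[OF refl])
        fix u assume u: "u \<in> W"
        have f1: "(\<Sum>u'\<in>W. (if u = u' then GG u else 0)) = GG u"
          using u by (simp add: W_def)
        have "(\<Sum>u'\<in>W. r / 2 * (GG u + GG u')) = r / 2 * (\<Sum>u'\<in>W. GG u + GG u')"
          by (rule sum_distrib_left[symmetric])
        also have "(\<Sum>u'\<in>W. GG u + GG u') = K * GG u + S" by (simp add: sum.distrib S_def K_def)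
        finally have f2: "(\<Sum>u'\<in>W. r / 2 * (GG u + GG u')) = r / 2 * (K * GG u + S)" .
        show "(\<Sum>u'\<in>W. (if u = u' then GG u else 0) + r / 2 * (GG u + GG u')) = GG u + r / 2 * (K * GG u + S)"
          by (simp only: sum.distrib f1 f2)
      qed
      also have "\<dots> = S + r * K * S"
      proof -
        have g1: "(\<Sum>u\<in>W. K * GG u) = K * S" by (simp add: S_def sum_distrib_left)
        have "(\<Sum>u\<in>W. r / 2 * (K * GG u + S)) = r / 2 * (\<Sum>u\<in>W. K * GG u + S)"
          by (rule sum_distrib_left[symmetric])
        also have "(\<Sum>u\<in>W. K * GG u + S) = K * S + K * S"
          by (simp only: sum.distrib g1) (simp add: K_def)
        finally have g2: "(\<Sum>u\<in>W. r / 2 * (K * GG u + S)) = r / 2 * (K * S + K * S)" .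
        have "(\<Sum>u\<in>W. GG u + r / 2 * (K * GG u + S)) = S + r / 2 * (K * S + K * S)"
          by (simp only: sum.distrib g2) (simp add: S_def)
        then show ?thesis by (simp add: algebra_simps)
      qed
      finally show ?thesis .
    qed
    finally show ?thesis .
  qed
  have A: "2 * \<gamma> * E4 \<le> 2 * \<gamma> * (\<gamma> * (r / 2 * (S + K * Gt)))"
    using gamma_pos e4 by simp
  have B: "\<gamma> * \<mu> * E8 \<le> \<gamma> * \<mu> * (\<gamma>\<^sup>2 * (S + r * K * S))"
    using gamma_pos mu_pos e8 by simp
  have C: "- 2 * \<gamma> * E6 \<le> - 2 * \<gamma> * (e t + \<mu> / 4 * a t - \<mu> / 2 * E8)"
    using gamma_pos e6 by simp
  have D1: "\<gamma>\<^sup>2 * r * K * Gt \<le> \<gamma>\<^sup>2 * r * real \<tau> * Gt"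
    using r0 Gt0 Kt by (intro mult_right_mono mult_left_mono) auto
  have D2: "\<gamma> * \<mu> * \<gamma>\<^sup>2 * r * K * S \<le> \<gamma> * \<mu> * \<gamma>\<^sup>2 * r * real \<tau> * S"
    using r0 S0 Kt gamma_pos mu_pos by (intro mult_right_mono mult_left_mono) auto
  have "a (t + 1) \<le> a t - 2 * \<gamma> * (e t + \<mu> / 4 * a t - \<mu> / 2 * E8) + 2 * \<gamma> * (\<gamma> * (r / 2 * (S + K * Gt))) + \<gamma>\<^sup>2 * Gt"
    using id A C by linarith
  also have "\<dots> = (1 - \<gamma> * \<mu> / 2) * a t - 2 * \<gamma> * e t + \<gamma> * \<mu> * E8 + \<gamma>\<^sup>2 * r * S + \<gamma>\<^sup>2 * r * K * Gt + \<gamma>\<^sup>2 * Gt"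
    by (simp add: algebra_simps power2_eq_square)
  also have "\<dots> \<le> (1 - \<gamma> * \<mu> / 2) * a t - 2 * \<gamma> * e t + \<gamma> * \<mu> * (\<gamma>\<^sup>2 * (S + r * K * S)) + \<gamma>\<^sup>2 * r * S + \<gamma>\<^sup>2 * r * K * Gt + \<gamma>\<^sup>2 * Gt"
    using B by linarith
  also have "\<dots> = (1 - \<gamma> * \<mu> / 2) * a t - 2 * \<gamma> * e t + \<gamma> * \<mu> * \<gamma>\<^sup>2 * S + \<gamma> * \<mu> * \<gamma>\<^sup>2 * r * K * S + \<gamma>\<^sup>2 * r * S + \<gamma>\<^sup>2 * r * K * Gt + \<gamma>\<^sup>2 * Gt"
    by (simp add: algebra_simps)
  also have "\<dots> \<le> (1 - \<gamma> * \<mu> / 2) * a t - 2 * \<gamma> * e t + \<gamma> * \<mu> * \<gamma>\<^sup>2 * S + \<gamma> * \<mu> * \<gamma>\<^sup>2 * r * real \<tau> * S + \<gamma>\<^sup>2 * r * S + \<gamma>\<^sup>2 * r * real \<tau> * Gt + \<gamma>\<^sup>2 * Gt"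
    using D1 D2 by linarith
  also have "\<dots> = (1 - \<gamma> * \<mu> / 2) * a t + \<gamma>\<^sup>2 * (1 + r * real \<tau>) * Gt
           + \<gamma>\<^sup>2 * (r + \<gamma> * \<mu> * (1 + r * real \<tau>)) * S - 2 * \<gamma> * e t"
    by (simp add: algebra_simps power2_eq_square)
  finally show ?thesis by (simp add: r_def Gt_def GG_def S_def W_def)
qed

end

theorem lemma1:
  fixes M :: "'w measure"
    and n :: nat and fs :: "nat \<Rightarrow> real^'d \<Rightarrow> real" and fs' :: "nat \<Rightarrow> real^'d \<Rightarrow> real^'d"
    and L \<mu> \<gamma> :: real and \<tau> :: nat and xstar x0 :: "real^'d" and \<alpha>0 :: "nat \<Rightarrow> real^'d"
    and smp :: "nat \<Rightarrow> 'w \<Rightarrow> nat"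
    and xh :: "nat \<Rightarrow> 'w \<Rightarrow> real^'d"
    and ah :: "nat \<Rightarrow> nat \<Rightarrow> 'w \<Rightarrow> real^'d"
    and rd :: "nat \<Rightarrow> nat \<Rightarrow> 'd \<Rightarrow> 'w \<Rightarrow> bool"
    and A :: "nat \<Rightarrow> nat \<Rightarrow> 'd \<Rightarrow> 'w \<Rightarrow> nat option"
    and g :: "nat \<Rightarrow> 'w \<Rightarrow> real^'d" and x :: "nat \<Rightarrow> 'w \<Rightarrow> real^'d"
    and a e :: "nat \<Rightarrow> real"
  assumes n_pos: "n \<ge> 1"
    and conv: "\<And>i. i < n \<Longrightarrow> convex_on UNIV (fs i)"
    and grad: "\<And>i y. i < n \<Longrightarrow> (fs i has_derivative (\<lambda>h. fs' i y \<bullet> h)) (at y)"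
    and lip: "\<And>i. i < n \<Longrightarrow> L-lipschitz_on UNIV (fs' i)"
    and mu_pos: "\<mu> > 0"
    and strong: "strongly_convex_on \<mu> UNIV (favg n fs)"
    and minim: "\<And>y. favg n fs xstar \<le> favg n fs y"
    and gamma_pos: "\<gamma> > 0"
    and alpha0_supp: "\<And>j v. j < n \<Longrightarrow> v \<notin> supp fs' j \<Longrightarrow> \<alpha>0 j $ v = 0"
    and P: "prob_space M"
    and smp_meas: "\<And>t. smp t \<in> measurable M (count_space UNIV)"
    and xh_meas: "\<And>t. xh t \<in> borel_measurable M"
    and ah_meas: "\<And>t j. ah t j \<in> borel_measurable M"
    and smp_range: "\<And>t \<omega>. \<omega> \<in> space M \<Longrightarrow> smp t \<omega> < n"
    and smp_unif: "\<And>t j. j < n \<Longrightarrow> measure M {\<omega> \<in> space M. smp t \<omega> = j} = 1 / real n"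
    and smp_indep: "\<And>t. prob_space.indep_set M
        (sets (vimage_algebra (space M) (smp t) (count_space UNIV)))
        (sets (vimage_algebra (space M)
           (\<lambda>\<omega>. (\<lambda>s\<in>{..t}. (xh s \<omega>, \<lambda>j\<in>{..<n}. ah s j \<omega>), \<lambda>s\<in>{..<t}. smp s \<omega>))
           (PiM {..t} (\<lambda>_. borel \<Otimes>\<^sub>M PiM {..<n} (\<lambda>_. borel)) \<Otimes>\<^sub>M PiM {..<t} (\<lambda>_. count_space UNIV))))"
    and g_def: "g \<equiv> (\<lambda>t \<omega>. gdir n fs' (smp t \<omega>) (xh t \<omega>) (\<lambda>j. ah t j \<omega>))"
    and xh_read: "\<And>t v \<omega>. \<omega> \<in> space M \<Longrightarrow>
        xh t \<omega> $ v = x0 $ v - \<gamma> * (\<Sum>u | u < t \<and> v \<in> supp fs' (smp u \<omega>) \<and> rd t u v \<omega>. g u \<omega> $ v)"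
    and overlap_x: "\<And>t u v \<omega>. \<omega> \<in> space M \<Longrightarrow> u + \<tau> + 1 \<le> t \<Longrightarrow> rd t u v \<omega>"
    and ah_read: "\<And>t j v \<omega>. \<omega> \<in> space M \<Longrightarrow> j < n \<Longrightarrow>
        ah t j \<omega> $ v = (case A t j v \<omega> of None \<Rightarrow> \<alpha>0 j $ v | Some u \<Rightarrow> fs' j (xh u \<omega>) $ v)"
    and A_valid: "\<And>t j v \<omega> u. \<omega> \<in> space M \<Longrightarrow> A t j v \<omega> = Some u \<Longrightarrow>
        u < t \<and> smp u \<omega> = j \<and> v \<in> supp fs' j"
    and overlap_alpha: "\<And>t j v \<omega> u. \<omega> \<in> space M \<Longrightarrow> u + \<tau> + 1 \<le> t \<Longrightarrow> smp u \<omega> = j \<Longrightarrow>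
        v \<in> supp fs' j \<Longrightarrow> A t j v \<omega> \<noteq> None"
    and x_def: "x \<equiv> (\<lambda>t \<omega>. x0 - \<gamma> *\<^sub>R (\<Sum>u<t. g u \<omega>))"
    and a_def: "a \<equiv> (\<lambda>t. integral\<^sup>L M (\<lambda>\<omega>. (norm (x t \<omega> - xstar))\<^sup>2))"
    and e_def: "e \<equiv> (\<lambda>t. integral\<^sup>L M (\<lambda>\<omega>. favg n fs (xh t \<omega>)) - favg n fs xstar)"
  shows "a (t + 1) \<le> (1 - \<gamma> * \<mu> / 2) * a t
           + \<gamma>\<^sup>2 * (1 + sqrt (Delta n fs') * real \<tau>) * integral\<^sup>L M (\<lambda>\<omega>. (norm (g t \<omega>))\<^sup>2)
           + \<gamma>\<^sup>2 * (sqrt (Delta n fs') + \<gamma> * \<mu> * (1 + sqrt (Delta n fs') * real \<tau>))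
               * (\<Sum>u\<in>{t - \<tau>..<t}. integral\<^sup>L M (\<lambda>\<omega>. (norm (g u \<omega>))\<^sup>2))
           - 2 * \<gamma> * e t"
proof -
  interpret asaga M n fs fs' L \<mu> \<gamma> \<tau> xstar x0 \<alpha>0 smp xh ah rd A g x a e
    by (rule asaga.intro) (fact assms)+
  show ?thesis by (rule main)
qed

end
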